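(* Let $R$ be a commutative ring with unit, $I$ an ideal of $R$, and $M$ and $\{M_\lambda\}_{\lambda\in\Lambda}$ $R$-modules. (1) $H_R(I,\prod_{\lambda\in\Lambda}M_\lambda)=\prod_{\lambda\in\Lambda}H_R(I,M_\lambda)$. (2) If $I$ is finitely generated, then $H_R(I,\bigoplus_{\lambda\in\Lambda}M_\lambda)=\bigoplus_{\lambda\in\Lambda}H_R(I,M_\lambda)$. (3) If $J=\mathrm{ann}(M)$, then $H_R(I,M)=H_{R/J}((I+J)/J,M)$. (4) If $S\subseteq R$ is a multiplicative set and $I$ is finitely generated, then the natural map induced by localisation identifies $S^{-1}H_R(I,M)$ with a submodule of $H_{S^{-1}R}(S^{-1}I,S^{-1}M)$ (i.e. this map is injective).
   Context: For a ring $R$, an ideal $I$ and an $R$-module $M$: $Z_R(I,M)=\{\varphi\in\mathrm{Hom}_R(I,M):\varphi(t)\in tM\text{ for all }t\in I\}$; $B_R(I,M)$ is the submodule of $\varphi\in Z_R(I,M)$ for which there exists $m\in M$ with $\varphi(t)=tm$ for all $t\in I$ (principal homomorphisms); $H_R(I,M)=Z_R(I,M)/B_R(I,M)$. A homomorphism $M\to N$ induces $H_R(I,M)\to H_R(I,N)$ by composition; localisation $\varphi\mapsto\varphi_S$ induces $S^{-1}H_R(I,M)\to H_{S^{-1}R}(S^{-1}I,S^{-1}M)$. *)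

theory Defs
  imports "HOL-Algebra.Algebra" "HOL-Library.FuncSet"
begin

definition is_mod_hom where
  "is_mod_hom R A B f \<longleftrightarrow> f \<in> carrier A \<rightarrow> carrier B \<and>
     (\<forall>x\<in>carrier A. \<forall>y\<in>carrier A. f (x \<oplus>\<^bsub>A\<^esub> y) = f x \<oplus>\<^bsub>B\<^esub> f y) \<and>
     (\<forall>r\<in>carrier R. \<forall>x\<in>carrier A. f (r \<odot>\<^bsub>A\<^esub> x) = r \<odot>\<^bsub>B\<^esub> f x)"

definition is_mod_iso where
  "is_mod_iso R A B f \<longleftrightarrow> is_mod_hom R A B f \<and> bij_betw f (carrier A) (carrier B)"

definition hom_lin where
  "hom_lin R I M = {\<phi>. \<phi> \<in> I \<rightarrow>\<^sub>E carrier M \<and>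
     (\<forall>s\<in>I. \<forall>t\<in>I. \<phi> (s \<oplus>\<^bsub>R\<^esub> t) = \<phi> s \<oplus>\<^bsub>M\<^esub> \<phi> t) \<and>
     (\<forall>r\<in>carrier R. \<forall>t\<in>I. \<phi> (r \<otimes>\<^bsub>R\<^esub> t) = r \<odot>\<^bsub>M\<^esub> \<phi> t)}"

definition Zset where
  "Zset R I M = {\<phi> \<in> hom_lin R I M. \<forall>t\<in>I. \<exists>m\<in>carrier M. \<phi> t = t \<odot>\<^bsub>M\<^esub> m}"

definition Bset where
  "Bset R I M = {\<phi> \<in> Zset R I M. \<exists>m\<in>carrier M. \<forall>t\<in>I. \<phi> t = t \<odot>\<^bsub>M\<^esub> m}"

definition hadd where "hadd I M \<phi> \<psi> = (\<lambda>t\<in>I. \<phi> t \<oplus>\<^bsub>M\<^esub> \<psi> t)"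
definition hsmult where "hsmult I M r \<phi> = (\<lambda>t\<in>I. r \<odot>\<^bsub>M\<^esub> \<phi> t)"

definition Hclass where
  "Hclass R I M \<phi> = {hadd I M \<phi> \<psi> | \<psi>. \<psi> \<in> Bset R I M}"

definition Hmod :: "('a,'c) ring_scheme \<Rightarrow> 'a set \<Rightarrow> ('a,'b,'d) module_scheme
     \<Rightarrow> ('a, ('a \<Rightarrow> 'b) set) module" where
  "Hmod R I M = \<lparr>carrier = Hclass R I M ` Zset R I M, monoid.mult = undefined, monoid.one = undefined,
     ring.zero = Bset R I M,
     ring.add = (\<lambda>U V. Hclass R I M (hadd I M (SOME \<phi>. \<phi> \<in> U) (SOME \<psi>. \<psi> \<in> V))),
     module.smult = (\<lambda>r Xa. Hclass R I M (hsmult I M r (SOME \<phi>. \<phi> \<in> Xa)))\<rparr>"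

definition Hmap where
  "Hmap R I N f Xa = Hclass R I N (\<lambda>t\<in>I. f ((SOME \<phi>. \<phi> \<in> Xa) t))"

definition prod_mod :: "('a,'c) ring_scheme \<Rightarrow> 'l set \<Rightarrow> ('l \<Rightarrow> ('a,'b,'d) module_scheme)
     \<Rightarrow> ('a, 'l \<Rightarrow> 'b) module" where
  "prod_mod R \<Lambda> M = \<lparr>carrier = Pi\<^sub>E \<Lambda> (\<lambda>l. carrier (M l)), monoid.mult = undefined, monoid.one = undefined,
     ring.zero = (\<lambda>l\<in>\<Lambda>. \<zero>\<^bsub>M l\<^esub>),
     ring.add = (\<lambda>x y. \<lambda>l\<in>\<Lambda>. x l \<oplus>\<^bsub>M l\<^esub> y l),
     module.smult = (\<lambda>r x. \<lambda>l\<in>\<Lambda>. r \<odot>\<^bsub>M l\<^esub> x l)\<rparr>"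

definition dsum_mod :: "('a,'c) ring_scheme \<Rightarrow> 'l set \<Rightarrow> ('l \<Rightarrow> ('a,'b,'d) module_scheme)
     \<Rightarrow> ('a, 'l \<Rightarrow> 'b) module" where
  "dsum_mod R \<Lambda> M = \<lparr>carrier = {x \<in> Pi\<^sub>E \<Lambda> (\<lambda>l. carrier (M l)). finite {l\<in>\<Lambda>. x l \<noteq> \<zero>\<^bsub>M l\<^esub>}},
     monoid.mult = undefined, monoid.one = undefined,
     ring.zero = (\<lambda>l\<in>\<Lambda>. \<zero>\<^bsub>M l\<^esub>),
     ring.add = (\<lambda>x y. \<lambda>l\<in>\<Lambda>. x l \<oplus>\<^bsub>M l\<^esub> y l),
     module.smult = (\<lambda>r x. \<lambda>l\<in>\<Lambda>. r \<odot>\<^bsub>M l\<^esub> x l)\<rparr>"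

definition can_prod where
  "can_prod R I \<Lambda> M Xa = (\<lambda>l\<in>\<Lambda>. Hmap R I (M l) (\<lambda>x. x l) Xa)"

definition ann_mod where
  "ann_mod R M = {r \<in> carrier R. \<forall>m\<in>carrier M. r \<odot>\<^bsub>M\<^esub> m = \<zero>\<^bsub>M\<^esub>}"

text \<open>M regarded as an R/J-module (J contained in ann M): (J + r) . m = r . m\<close>
definition quot_mod :: "('a,'c) ring_scheme \<Rightarrow> 'a set \<Rightarrow> ('a,'b,'d) module_scheme
     \<Rightarrow> ('a set, 'b) module" where
  "quot_mod R J M = \<lparr>carrier = carrier M, monoid.mult = monoid.mult M, monoid.one = monoid.one M, ring.zero = ring.zero M,
     ring.add = ring.add M, module.smult = (\<lambda>c m. (SOME r. r \<in> c) \<odot>\<^bsub>M\<^esub> m)\<rparr>"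

definition quot_ideal where
  "quot_ideal R I J = (\<lambda>x. J +>\<^bsub>R\<^esub> x) ` (I <+>\<^bsub>R\<^esub> J)"

definition can_quot where
  "can_quot R I J M Xa =
     (let \<phi> = SOME \<phi>. \<phi> \<in> Xa in
      Hclass (R Quot J) (quot_ideal R I J) (quot_mod R J M)
        (\<lambda>c\<in>quot_ideal R I J. \<phi> (SOME t. t \<in> I \<and> c = J +>\<^bsub>R\<^esub> t)))"

definition mult_set where
  "mult_set R S \<longleftrightarrow> S \<subseteq> carrier R \<and> \<one>\<^bsub>R\<^esub> \<in> S \<and> (\<forall>s\<in>S. \<forall>u\<in>S. s \<otimes>\<^bsub>R\<^esub> u \<in> S)"

text \<open>The fraction m/s in S^{-1}M, as an equivalence class of pairs.\<close>
definition loc_cls where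
  "loc_cls R S M m s = {(m', s'). m' \<in> carrier M \<and> s' \<in> S \<and>
     (\<exists>u\<in>S. u \<odot>\<^bsub>M\<^esub> ((s' \<odot>\<^bsub>M\<^esub> m) \<ominus>\<^bsub>M\<^esub> (s \<odot>\<^bsub>M\<^esub> m')) = \<zero>\<^bsub>M\<^esub>)}"

definition ring_mod :: "('a,'c) ring_scheme \<Rightarrow> ('a,'a) module" where
  "ring_mod R = \<lparr>carrier = carrier R, monoid.mult = monoid.mult R, monoid.one = monoid.one R, ring.zero = ring.zero R,
     ring.add = ring.add R, module.smult = monoid.mult R\<rparr>"

definition loc_ring :: "('a,'c) ring_scheme \<Rightarrow> 'a set \<Rightarrow> ('a \<times> 'a) set ring" where
  "loc_ring R S = \<lparr>carrier = {loc_cls R S (ring_mod R) r s | r s. r \<in> carrier R \<and> s \<in> S},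
     monoid.mult = (\<lambda>U V. case (SOME p. p \<in> U, SOME q. q \<in> V) of ((a, s), (b, u)) \<Rightarrow>
               loc_cls R S (ring_mod R) (a \<otimes>\<^bsub>R\<^esub> b) (s \<otimes>\<^bsub>R\<^esub> u)),
     monoid.one = loc_cls R S (ring_mod R) \<one>\<^bsub>R\<^esub> \<one>\<^bsub>R\<^esub>,
     ring.zero = loc_cls R S (ring_mod R) \<zero>\<^bsub>R\<^esub> \<one>\<^bsub>R\<^esub>,
     ring.add = (\<lambda>U V. case (SOME p. p \<in> U, SOME q. q \<in> V) of ((a, s), (b, u)) \<Rightarrow>
               loc_cls R S (ring_mod R) ((u \<otimes>\<^bsub>R\<^esub> a) \<oplus>\<^bsub>R\<^esub> (s \<otimes>\<^bsub>R\<^esub> b)) (s \<otimes>\<^bsub>R\<^esub> u))\<rparr>"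

definition loc_mod :: "('a,'c) ring_scheme \<Rightarrow> 'a set \<Rightarrow> ('a,'b,'d) module_scheme
     \<Rightarrow> (('a \<times> 'a) set, ('b \<times> 'a) set) module" where
  "loc_mod R S M = \<lparr>carrier = {loc_cls R S M m s | m s. m \<in> carrier M \<and> s \<in> S},
     monoid.mult = undefined, monoid.one = undefined,
     ring.zero = loc_cls R S M \<zero>\<^bsub>M\<^esub> \<one>\<^bsub>R\<^esub>,
     ring.add = (\<lambda>U V. case (SOME p. p \<in> U, SOME q. q \<in> V) of ((m, s), (n, u)) \<Rightarrow>
               loc_cls R S M ((u \<odot>\<^bsub>M\<^esub> m) \<oplus>\<^bsub>M\<^esub> (s \<odot>\<^bsub>M\<^esub> n)) (s \<otimes>\<^bsub>R\<^esub> u)),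
     module.smult = (\<lambda>A Xa. case (SOME p. p \<in> A, SOME q. q \<in> Xa) of ((a, s), (m, u)) \<Rightarrow>
               loc_cls R S M (a \<odot>\<^bsub>M\<^esub> m) (s \<otimes>\<^bsub>R\<^esub> u))\<rparr>"

definition loc_ideal where
  "loc_ideal R S I = {loc_cls R S (ring_mod R) t s | t s. t \<in> I \<and> s \<in> S}"

definition loc_hom where
  "loc_hom R S I M \<phi> = (\<lambda>c\<in>loc_ideal R S I.
      case (SOME p. p \<in> c \<and> fst p \<in> I) of (t, u) \<Rightarrow> loc_cls R S M (\<phi> t) u)"

text \<open>Natural map S^{-1}H_R(I,M) -> H_{S^{-1}R}(S^{-1}I, S^{-1}M): [phi]/s |-> [(1/s) phi_S].\<close>
definition can_loc where
  "can_loc R S I M \<xi> =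
     (case SOME p. p \<in> \<xi> of (Xa, s) \<Rightarrow>
        Hclass (loc_ring R S) (loc_ideal R S I) (loc_mod R S M)
          (\<lambda>c\<in>loc_ideal R S I.
              loc_cls R S (ring_mod R) \<one>\<^bsub>R\<^esub> s \<odot>\<^bsub>loc_mod R S M\<^esub>
                loc_hom R S I M (SOME \<phi>. \<phi> \<in> Xa) c))"

definition fin_gen_ideal where
  "fin_gen_ideal R I \<longleftrightarrow> (\<exists>G. finite G \<and> G \<subseteq> carrier R \<and> I = Idl\<^bsub>R\<^esub> G)"

end

theory Submission
  imports Defs
begin

definition hrel where
  "hrel I M \<phi> \<psi> \<longleftrightarrow> (\<exists>m\<in>carrier M. \<forall>t\<in>I. \<psi> t = \<phi> t \<oplus>\<^bsub>M\<^esub> t \<odot>\<^bsub>M\<^esub> m)"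

locale hctx = module +
  fixes I :: "'a set"
  assumes I_sub: "I \<subseteq> carrier R"
    and I_add: "\<lbrakk>s \<in> I; t \<in> I\<rbrakk> \<Longrightarrow> s \<oplus> t \<in> I"
    and I_mult: "\<lbrakk>r \<in> carrier R; t \<in> I\<rbrakk> \<Longrightarrow> r \<otimes> t \<in> I"
begin

lemma I_carr: "t \<in> I \<Longrightarrow> t \<in> carrier R" using I_sub by auto

lemma smult_comm: "\<lbrakk>a \<in> carrier R; b \<in> carrier R; x \<in> carrier M\<rbrakk> \<Longrightarrow>
   a \<odot>\<^bsub>M\<^esub> (b \<odot>\<^bsub>M\<^esub> x) = b \<odot>\<^bsub>M\<^esub> (a \<odot>\<^bsub>M\<^esub> x)"
  by (metis smult_assoc1 m_comm)

lemma ZsetI: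
  assumes "\<phi> \<in> I \<rightarrow>\<^sub>E carrier M"
    and "\<And>s t. s \<in> I \<Longrightarrow> t \<in> I \<Longrightarrow> \<phi> (s \<oplus> t) = \<phi> s \<oplus>\<^bsub>M\<^esub> \<phi> t"
    and "\<And>r t. r \<in> carrier R \<Longrightarrow> t \<in> I \<Longrightarrow> \<phi> (r \<otimes> t) = r \<odot>\<^bsub>M\<^esub> \<phi> t"
    and "\<And>t. t \<in> I \<Longrightarrow> \<exists>m\<in>carrier M. \<phi> t = t \<odot>\<^bsub>M\<^esub> m"
  shows "\<phi> \<in> Zset R I M"
  using assms unfolding Zset_def hom_lin_def by auto

lemma ZsetD:
  assumes "\<phi> \<in> Zset R I M"
  shows "\<phi> \<in> I \<rightarrow>\<^sub>E carrier M"
    and "\<And>s t. s \<in> I \<Longrightarrow> t \<in> I \<Longrightarrow> \<phi> (s \<oplus> t) = \<phi> s \<oplus>\<^bsub>M\<^esub> \<phi> t"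
    and "\<And>r t. r \<in> carrier R \<Longrightarrow> t \<in> I \<Longrightarrow> \<phi> (r \<otimes> t) = r \<odot>\<^bsub>M\<^esub> \<phi> t"
    and "\<And>t. t \<in> I \<Longrightarrow> \<exists>m\<in>carrier M. \<phi> t = t \<odot>\<^bsub>M\<^esub> m"
  using assms unfolding Zset_def hom_lin_def by auto

lemma Zset_carr: "\<phi> \<in> Zset R I M \<Longrightarrow> t \<in> I \<Longrightarrow> \<phi> t \<in> carrier M"
  using ZsetD(1) by blast

lemma Zset_ext: "\<phi> \<in> Zset R I M \<Longrightarrow> t \<notin> I \<Longrightarrow> \<phi> t = undefined"
  using ZsetD(1) by (auto simp: PiE_def extensional_def)

lemma prin_Z: assumes m: "m \<in> carrier M" shows "(\<lambda>t\<in>I. t \<odot>\<^bsub>M\<^esub> m) \<in> Zset R I M"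
proof (rule ZsetI)
  show "(\<lambda>t\<in>I. t \<odot>\<^bsub>M\<^esub> m) \<in> I \<rightarrow>\<^sub>E carrier M" using m I_carr by auto
  fix s t assume "s \<in> I" "t \<in> I"
  then show "(\<lambda>t\<in>I. t \<odot>\<^bsub>M\<^esub> m) (s \<oplus> t) = (\<lambda>t\<in>I. t \<odot>\<^bsub>M\<^esub> m) s \<oplus>\<^bsub>M\<^esub> (\<lambda>t\<in>I. t \<odot>\<^bsub>M\<^esub> m) t"
    using I_add I_carr m by (simp add: smult_l_distr)
next
  fix r t assume "r \<in> carrier R" "t \<in> I"
  then show "(\<lambda>t\<in>I. t \<odot>\<^bsub>M\<^esub> m) (r \<otimes> t) = r \<odot>\<^bsub>M\<^esub> (\<lambda>t\<in>I. t \<odot>\<^bsub>M\<^esub> m) t"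
    using I_mult I_carr m by (simp add: smult_assoc1)
next
  fix t assume "t \<in> I" then show "\<exists>ma\<in>carrier M. (\<lambda>t\<in>I. t \<odot>\<^bsub>M\<^esub> m) t = t \<odot>\<^bsub>M\<^esub> ma"
    using m by auto
qed

lemma prin_B: assumes m: "m \<in> carrier M" shows "(\<lambda>t\<in>I. t \<odot>\<^bsub>M\<^esub> m) \<in> Bset R I M"
  using prin_Z[OF m] m unfolding Bset_def by auto

lemma zero_fun_eq: "(\<lambda>t\<in>I. \<zero>\<^bsub>M\<^esub>) = (\<lambda>t\<in>I. t \<odot>\<^bsub>M\<^esub> \<zero>\<^bsub>M\<^esub>)"
  using I_carr by (auto intro!: restrict_ext)

lemma zero_B: "(\<lambda>t\<in>I. \<zero>\<^bsub>M\<^esub>) \<in> Bset R I M"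
  using prin_B[of "\<zero>\<^bsub>M\<^esub>"] zero_fun_eq by simp

lemma B_Z: "Bset R I M \<subseteq> Zset R I M" unfolding Bset_def by auto

lemma hadd_Z: assumes "\<phi> \<in> Zset R I M" "\<psi> \<in> Zset R I M" shows "hadd I M \<phi> \<psi> \<in> Zset R I M"
proof (rule ZsetI)
  note c = Zset_carr[OF assms(1)] Zset_carr[OF assms(2)]
  show "hadd I M \<phi> \<psi> \<in> I \<rightarrow>\<^sub>E carrier M" using c by (auto simp: hadd_def)
  fix s t assume st: "s \<in> I" "t \<in> I"
  then show "hadd I M \<phi> \<psi> (s \<oplus> t) = hadd I M \<phi> \<psi> s \<oplus>\<^bsub>M\<^esub> hadd I M \<phi> \<psi> t"
    using I_add c ZsetD(2)[OF assms(1)] ZsetD(2)[OF assms(2)]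
    by (simp add: hadd_def M.a_ac)
next
  note c = Zset_carr[OF assms(1)] Zset_carr[OF assms(2)]
  fix r t assume "r \<in> carrier R" "t \<in> I"
  then show "hadd I M \<phi> \<psi> (r \<otimes> t) = r \<odot>\<^bsub>M\<^esub> hadd I M \<phi> \<psi> t"
    using I_mult c ZsetD(3)[OF assms(1)] ZsetD(3)[OF assms(2)]
    by (simp add: hadd_def smult_r_distr)
next
  fix t assume t: "t \<in> I"
  obtain m1 where m1: "m1 \<in> carrier M" "\<phi> t = t \<odot>\<^bsub>M\<^esub> m1" using ZsetD(4)[OF assms(1) t] by blast
  obtain m2 where m2: "m2 \<in> carrier M" "\<psi> t = t \<odot>\<^bsub>M\<^esub> m2" using ZsetD(4)[OF assms(2) t] by blast
  show "\<exists>m\<in>carrier M. hadd I M \<phi> \<psi> t = t \<odot>\<^bsub>M\<^esub> m"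
    using m1 m2 t I_carr by (auto simp: hadd_def smult_r_distr intro!: bexI[of _ "m1 \<oplus>\<^bsub>M\<^esub> m2"])
qed

lemma hsmult_Z: assumes r: "r \<in> carrier R" and "\<phi> \<in> Zset R I M" shows "hsmult I M r \<phi> \<in> Zset R I M"
proof (rule ZsetI)
  note c = Zset_carr[OF assms(2)]
  show "hsmult I M r \<phi> \<in> I \<rightarrow>\<^sub>E carrier M" using c r by (auto simp: hsmult_def)
  fix s t assume st: "s \<in> I" "t \<in> I"
  then show "hsmult I M r \<phi> (s \<oplus> t) = hsmult I M r \<phi> s \<oplus>\<^bsub>M\<^esub> hsmult I M r \<phi> t"
    using I_add c ZsetD(2)[OF assms(2)] r
    by (simp add: hsmult_def smult_r_distr)
next
  note c = Zset_carr[OF assms(2)]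
  fix r' t assume "r' \<in> carrier R" "t \<in> I"
  then show "hsmult I M r \<phi> (r' \<otimes> t) = r' \<odot>\<^bsub>M\<^esub> hsmult I M r \<phi> t"
    using I_mult c ZsetD(3)[OF assms(2)] r
    by (simp add: hsmult_def smult_comm)
next
  fix t assume t: "t \<in> I"
  obtain m1 where m1: "m1 \<in> carrier M" "\<phi> t = t \<odot>\<^bsub>M\<^esub> m1" using ZsetD(4)[OF assms(2) t] by blast
  show "\<exists>m\<in>carrier M. hsmult I M r \<phi> t = t \<odot>\<^bsub>M\<^esub> m"
    using m1 t I_carr r by (auto simp: hsmult_def smult_comm intro!: bexI[of _ "r \<odot>\<^bsub>M\<^esub> m1"])
qed

lemma Hclass_mem:
  assumes phi: "\<phi> \<in> Zset R I M"
  shows "\<psi> \<in> Hclass R I M \<phi> \<longleftrightarrow> \<psi> \<in> Zset R I M \<and> hrel I M \<phi> \<psi>"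
proof
  assume "\<psi> \<in> Hclass R I M \<phi>"
  then obtain b where b: "b \<in> Bset R I M" "\<psi> = hadd I M \<phi> b" unfolding Hclass_def by auto
  then obtain m where m: "m \<in> carrier M" "\<forall>t\<in>I. b t = t \<odot>\<^bsub>M\<^esub> m" unfolding Bset_def by auto
  show "\<psi> \<in> Zset R I M \<and> hrel I M \<phi> \<psi>"
    using hadd_Z[OF phi] b B_Z m unfolding hrel_def by (auto simp: hadd_def)
next
  assume a: "\<psi> \<in> Zset R I M \<and> hrel I M \<phi> \<psi>"
  then obtain m where m: "m \<in> carrier M" "\<forall>t\<in>I. \<psi> t = \<phi> t \<oplus>\<^bsub>M\<^esub> t \<odot>\<^bsub>M\<^esub> m" unfolding hrel_def by auto
  have "\<psi> = hadd I M \<phi> (\<lambda>t\<in>I. t \<odot>\<^bsub>M\<^esub> m)"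
  proof
    fix t show "\<psi> t = hadd I M \<phi> (\<lambda>t\<in>I. t \<odot>\<^bsub>M\<^esub> m) t"
      using m Zset_ext[of \<psi> t] a by (cases "t \<in> I") (auto simp: hadd_def)
  qed
  then show "\<psi> \<in> Hclass R I M \<phi>" unfolding Hclass_def using prin_B[OF m(1)] by blast
qed

lemma hrel_refl: "\<phi> \<in> Zset R I M \<Longrightarrow> hrel I M \<phi> \<phi>"
  unfolding hrel_def using Zset_carr I_carr by (auto intro!: bexI[of _ "\<zero>\<^bsub>M\<^esub>"])

lemma hrel_sym: assumes "\<phi> \<in> Zset R I M" "\<psi> \<in> Zset R I M" "hrel I M \<phi> \<psi>" shows "hrel I M \<psi> \<phi>"
proof -
  obtain m where m: "m \<in> carrier M" "\<forall>t\<in>I. \<psi> t = \<phi> t \<oplus>\<^bsub>M\<^esub> t \<odot>\<^bsub>M\<^esub> m" using assms(3) unfolding hrel_def by auto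
  have "\<forall>t\<in>I. \<phi> t = \<psi> t \<oplus>\<^bsub>M\<^esub> t \<odot>\<^bsub>M\<^esub> (\<ominus>\<^bsub>M\<^esub> m)"
  proof
    fix t assume t: "t \<in> I"
    have c: "\<phi> t \<in> carrier M" "t \<odot>\<^bsub>M\<^esub> m \<in> carrier M" using Zset_carr[OF assms(1) t] I_carr[OF t] m by auto
    show "\<phi> t = \<psi> t \<oplus>\<^bsub>M\<^esub> t \<odot>\<^bsub>M\<^esub> (\<ominus>\<^bsub>M\<^esub> m)"
      using m t c I_carr[OF t] by (simp add: smult_r_minus M.a_assoc M.r_neg)
  qed
  then show ?thesis using m unfolding hrel_def by auto
qed

lemma hrel_trans: assumes "\<phi> \<in> Zset R I M" "hrel I M \<phi> \<psi>" "hrel I M \<psi> \<chi>" shows "hrel I M \<phi> \<chi>"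
proof -
  obtain m where m: "m \<in> carrier M" "\<forall>t\<in>I. \<psi> t = \<phi> t \<oplus>\<^bsub>M\<^esub> t \<odot>\<^bsub>M\<^esub> m" using assms(2) unfolding hrel_def by auto
  obtain n where n: "n \<in> carrier M" "\<forall>t\<in>I. \<chi> t = \<psi> t \<oplus>\<^bsub>M\<^esub> t \<odot>\<^bsub>M\<^esub> n" using assms(3) unfolding hrel_def by auto
  have "\<forall>t\<in>I. \<chi> t = \<phi> t \<oplus>\<^bsub>M\<^esub> t \<odot>\<^bsub>M\<^esub> (m \<oplus>\<^bsub>M\<^esub> n)"
    using m n Zset_carr[OF assms(1)] I_carr by (simp add: smult_r_distr M.a_assoc)
  then show ?thesis using m n unfolding hrel_def by auto
qed

lemma Hclass_eq:
  assumes "\<phi> \<in> Zset R I M" "\<psi> \<in> Zset R I M"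
  shows "Hclass R I M \<phi> = Hclass R I M \<psi> \<longleftrightarrow> hrel I M \<phi> \<psi>"
proof
  assume "Hclass R I M \<phi> = Hclass R I M \<psi>"
  moreover have "\<psi> \<in> Hclass R I M \<psi>" using Hclass_mem[OF assms(2)] hrel_refl assms by auto
  ultimately show "hrel I M \<phi> \<psi>" using Hclass_mem[OF assms(1)] by auto
next
  assume h: "hrel I M \<phi> \<psi>"
  show "Hclass R I M \<phi> = Hclass R I M \<psi>"
    using Hclass_mem[OF assms(1)] Hclass_mem[OF assms(2)] hrel_sym[OF assms h] h hrel_trans assms
    by blast
qed

lemma Hclass_self: "\<phi> \<in> Zset R I M \<Longrightarrow> \<phi> \<in> Hclass R I M \<phi>"
  using Hclass_mem hrel_refl by auto

lemma some_rep:
  assumes "\<phi> \<in> Zset R I M"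
  shows "(SOME x. x \<in> Hclass R I M \<phi>) \<in> Zset R I M"
    and "hrel I M \<phi> (SOME x. x \<in> Hclass R I M \<phi>)"
    and "Hclass R I M (SOME x. x \<in> Hclass R I M \<phi>) = Hclass R I M \<phi>"
proof -
  have "(SOME x. x \<in> Hclass R I M \<phi>) \<in> Hclass R I M \<phi>" using Hclass_self[OF assms] by (rule someI[where P="\<lambda>x. x \<in> Hclass R I M \<phi>"])
  then show "(SOME x. x \<in> Hclass R I M \<phi>) \<in> Zset R I M" "hrel I M \<phi> (SOME x. x \<in> Hclass R I M \<phi>)"
    using Hclass_mem[OF assms] by auto
  then show "Hclass R I M (SOME x. x \<in> Hclass R I M \<phi>) = Hclass R I M \<phi>"
    using Hclass_eq assms hrel_sym by blast
qed

lemma hadd_hrel: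
  assumes "\<phi> \<in> Zset R I M" "\<psi> \<in> Zset R I M" "hrel I M \<phi> \<phi>'" "hrel I M \<psi> \<psi>'"
  shows "hrel I M (hadd I M \<phi> \<psi>) (hadd I M \<phi>' \<psi>')"
proof -
  obtain m where m: "m \<in> carrier M" "\<forall>t\<in>I. \<phi>' t = \<phi> t \<oplus>\<^bsub>M\<^esub> t \<odot>\<^bsub>M\<^esub> m" using assms(3) unfolding hrel_def by auto
  obtain n where n: "n \<in> carrier M" "\<forall>t\<in>I. \<psi>' t = \<psi> t \<oplus>\<^bsub>M\<^esub> t \<odot>\<^bsub>M\<^esub> n" using assms(4) unfolding hrel_def by auto
  have "\<forall>t\<in>I. hadd I M \<phi>' \<psi>' t = hadd I M \<phi> \<psi> t \<oplus>\<^bsub>M\<^esub> t \<odot>\<^bsub>M\<^esub> (m \<oplus>\<^bsub>M\<^esub> n)"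
    using m n Zset_carr[OF assms(1)] Zset_carr[OF assms(2)] I_carr by (simp add: hadd_def smult_r_distr M.a_ac)
  then show ?thesis using m n unfolding hrel_def by auto
qed

lemma hsmult_hrel:
  assumes r: "r \<in> carrier R" and "\<phi> \<in> Zset R I M" "hrel I M \<phi> \<phi>'"
  shows "hrel I M (hsmult I M r \<phi>) (hsmult I M r \<phi>')"
proof -
  obtain m where m: "m \<in> carrier M" "\<forall>t\<in>I. \<phi>' t = \<phi> t \<oplus>\<^bsub>M\<^esub> t \<odot>\<^bsub>M\<^esub> m" using assms(3) unfolding hrel_def by auto
  have "\<forall>t\<in>I. hsmult I M r \<phi>' t = hsmult I M r \<phi> t \<oplus>\<^bsub>M\<^esub> t \<odot>\<^bsub>M\<^esub> (r \<odot>\<^bsub>M\<^esub> m)"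
    using m r Zset_carr[OF assms(2)] I_carr by (simp add: hsmult_def smult_r_distr smult_comm)
  then show ?thesis using m r unfolding hrel_def by auto
qed

lemma Hmod_carrier: "Xa \<in> carrier (Hmod R I M) \<longleftrightarrow> (\<exists>\<phi>\<in>Zset R I M. Xa = Hclass R I M \<phi>)"
  unfolding Hmod_def by auto

lemma Hmod_add:
  assumes "\<phi> \<in> Zset R I M" "\<psi> \<in> Zset R I M"
  shows "Hclass R I M \<phi> \<oplus>\<^bsub>Hmod R I M\<^esub> Hclass R I M \<psi> = Hclass R I M (hadd I M \<phi> \<psi>)"
proof -
  have "Hclass R I M \<phi> \<oplus>\<^bsub>Hmod R I M\<^esub> Hclass R I M \<psi> =
     Hclass R I M (hadd I M (SOME x. x \<in> Hclass R I M \<phi>) (SOME x. x \<in> Hclass R I M \<psi>))"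
    unfolding Hmod_def by simp
  also have "\<dots> = Hclass R I M (hadd I M \<phi> \<psi>)"
    using assms some_rep hadd_Z Hclass_eq hrel_sym hadd_hrel by metis
  finally show ?thesis .
qed

lemma Hmod_smult:
  assumes "r \<in> carrier R" "\<phi> \<in> Zset R I M"
  shows "r \<odot>\<^bsub>Hmod R I M\<^esub> Hclass R I M \<phi> = Hclass R I M (hsmult I M r \<phi>)"
proof -
  have "r \<odot>\<^bsub>Hmod R I M\<^esub> Hclass R I M \<phi> =
     Hclass R I M (hsmult I M r (SOME x. x \<in> Hclass R I M \<phi>))"
    unfolding Hmod_def by simp
  also have "\<dots> = Hclass R I M (hsmult I M r \<phi>)"
    using assms some_rep hsmult_Z Hclass_eq hrel_sym hsmult_hrel by metis
  finally show ?thesis .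
qed

lemma Bset_Hclass: "Bset R I M = Hclass R I M (\<lambda>t\<in>I. \<zero>\<^bsub>M\<^esub>)"
proof -
  have z: "(\<lambda>t\<in>I. \<zero>\<^bsub>M\<^esub>) \<in> Zset R I M" using zero_B B_Z by auto
  show ?thesis
  proof (intro equalityI subsetI)
    fix \<psi> assume "\<psi> \<in> Bset R I M"
    then show "\<psi> \<in> Hclass R I M (\<lambda>t\<in>I. \<zero>\<^bsub>M\<^esub>)" unfolding Bset_def Hclass_mem[OF z] hrel_def
      using I_carr by auto
  next
    fix \<psi> assume "\<psi> \<in> Hclass R I M (\<lambda>t\<in>I. \<zero>\<^bsub>M\<^esub>)"
    then show "\<psi> \<in> Bset R I M" unfolding Bset_def Hclass_mem[OF z] hrel_def
      using I_carr by auto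
  qed
qed

lemma Hmod_zero: "\<zero>\<^bsub>Hmod R I M\<^esub> = Hclass R I M (\<lambda>t\<in>I. \<zero>\<^bsub>M\<^esub>)"
  using Bset_Hclass unfolding Hmod_def by simp

lemma Hclass_zero_iff: assumes "\<phi> \<in> Zset R I M"
  shows "Hclass R I M \<phi> = \<zero>\<^bsub>Hmod R I M\<^esub> \<longleftrightarrow> (\<exists>m\<in>carrier M. \<forall>t\<in>I. \<phi> t = t \<odot>\<^bsub>M\<^esub> m)"
proof -
  have z: "(\<lambda>t\<in>I. \<zero>\<^bsub>M\<^esub>) \<in> Zset R I M" using zero_B B_Z by auto
  show ?thesis unfolding Hmod_zero Hclass_eq[OF assms z]
    using hrel_sym[OF assms z] hrel_sym[OF z assms] unfolding hrel_def
    using I_carr Zset_carr[OF assms] by auto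
qed


lemma Hmod_module: "module R (Hmod R I M)"
proof -
  have z: "(\<lambda>t\<in>I. \<zero>\<^bsub>M\<^esub>) \<in> Zset R I M" using zero_B B_Z by auto
  note HC = Hmod_carrier
  have ag: "abelian_group (Hmod R I M)"
  proof (rule abelian_groupI)
    fix x y assume "x \<in> carrier (Hmod R I M)" "y \<in> carrier (Hmod R I M)"
    then obtain \<phi> \<psi> where "\<phi> \<in> Zset R I M" "\<psi> \<in> Zset R I M" "x = Hclass R I M \<phi>" "y = Hclass R I M \<psi>"
      unfolding HC by auto
    then show "x \<oplus>\<^bsub>Hmod R I M\<^esub> y \<in> carrier (Hmod R I M)"
      and "x \<oplus>\<^bsub>Hmod R I M\<^esub> y = y \<oplus>\<^bsub>Hmod R I M\<^esub> x"
      using Hmod_add hadd_Z HC Zset_carr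
      by (auto simp: hadd_def M.a_comm intro!: arg_cong[where f="Hclass R I M"] restrict_ext)
  next
    show "\<zero>\<^bsub>Hmod R I M\<^esub> \<in> carrier (Hmod R I M)" using Hmod_zero HC z by auto
  next
    fix x y w assume "x \<in> carrier (Hmod R I M)" "y \<in> carrier (Hmod R I M)" "w \<in> carrier (Hmod R I M)"
    then obtain \<phi> \<psi> \<chi> where "\<phi> \<in> Zset R I M" "\<psi> \<in> Zset R I M" "\<chi> \<in> Zset R I M"
      "x = Hclass R I M \<phi>" "y = Hclass R I M \<psi>" "w = Hclass R I M \<chi>"
      unfolding HC by auto
    then show "x \<oplus>\<^bsub>Hmod R I M\<^esub> y \<oplus>\<^bsub>Hmod R I M\<^esub> w = x \<oplus>\<^bsub>Hmod R I M\<^esub> (y \<oplus>\<^bsub>Hmod R I M\<^esub> w)"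
      using Hmod_add hadd_Z Zset_carr
      by (auto simp: hadd_def M.a_assoc intro!: arg_cong[where f="Hclass R I M"] restrict_ext)
  next
    fix x assume "x \<in> carrier (Hmod R I M)"
    then obtain \<phi> where p: "\<phi> \<in> Zset R I M" "x = Hclass R I M \<phi>" unfolding HC by auto
    have "hadd I M (\<lambda>t\<in>I. \<zero>\<^bsub>M\<^esub>) \<phi> = \<phi>"
    proof
      fix t show "hadd I M (\<lambda>t\<in>I. \<zero>\<^bsub>M\<^esub>) \<phi> t = \<phi> t"
        using p Zset_carr[OF p(1)] Zset_ext[OF p(1)] by (cases "t \<in> I") (auto simp: hadd_def)
    qed
    then show "\<zero>\<^bsub>Hmod R I M\<^esub> \<oplus>\<^bsub>Hmod R I M\<^esub> x = x" using p Hmod_add[OF z p(1)] Hmod_zero by simp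
    have n: "hsmult I M (\<ominus> \<one>) \<phi> \<in> Zset R I M" using hsmult_Z p by auto
    have "hadd I M (hsmult I M (\<ominus> \<one>) \<phi>) \<phi> = (\<lambda>t\<in>I. \<zero>\<^bsub>M\<^esub>)"
      using Zset_carr[OF p(1)]
      by (auto simp: hadd_def hsmult_def smult_l_minus M.l_neg intro!: restrict_ext)
    then have "Hclass R I M (hsmult I M (\<ominus> \<one>) \<phi>) \<oplus>\<^bsub>Hmod R I M\<^esub> x = \<zero>\<^bsub>Hmod R I M\<^esub>"
      using Hmod_add[OF n p(1)] p Hmod_zero by simp
    then show "\<exists>y\<in>carrier (Hmod R I M). y \<oplus>\<^bsub>Hmod R I M\<^esub> x = \<zero>\<^bsub>Hmod R I M\<^esub>"
      using n HC by blast
  qed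
  show ?thesis
  proof (rule moduleI[OF is_cring ag])
    fix a x assume a: "a \<in> carrier R" and "x \<in> carrier (Hmod R I M)"
    then obtain \<phi> where p: "\<phi> \<in> Zset R I M" "x = Hclass R I M \<phi>" unfolding HC by auto
    show "a \<odot>\<^bsub>Hmod R I M\<^esub> x \<in> carrier (Hmod R I M)" using Hmod_smult[OF a p(1)] hsmult_Z[OF a p(1)] p HC by auto
  next
    fix a b x assume a: "a \<in> carrier R" and b: "b \<in> carrier R" and "x \<in> carrier (Hmod R I M)"
    then obtain \<phi> where p: "\<phi> \<in> Zset R I M" "x = Hclass R I M \<phi>" unfolding HC by auto
    show "(a \<oplus> b) \<odot>\<^bsub>Hmod R I M\<^esub> x = a \<odot>\<^bsub>Hmod R I M\<^esub> x \<oplus>\<^bsub>Hmod R I M\<^esub> b \<odot>\<^bsub>Hmod R I M\<^esub> x"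
      using Hmod_smult a b p Hmod_add hsmult_Z Zset_carr
      by (auto simp: hadd_def hsmult_def smult_l_distr intro!: arg_cong[where f="Hclass R I M"] restrict_ext)
    show "(a \<otimes> b) \<odot>\<^bsub>Hmod R I M\<^esub> x = a \<odot>\<^bsub>Hmod R I M\<^esub> (b \<odot>\<^bsub>Hmod R I M\<^esub> x)"
      using Hmod_smult a b p hsmult_Z Zset_carr
      by (auto simp: hsmult_def smult_assoc1 intro!: arg_cong[where f="Hclass R I M"] restrict_ext)
  next
    fix a x y assume a: "a \<in> carrier R" and "x \<in> carrier (Hmod R I M)" "y \<in> carrier (Hmod R I M)"
    then obtain \<phi> \<psi> where p: "\<phi> \<in> Zset R I M" "\<psi> \<in> Zset R I M" "x = Hclass R I M \<phi>" "y = Hclass R I M \<psi>"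
      unfolding HC by auto
    show "a \<odot>\<^bsub>Hmod R I M\<^esub> (x \<oplus>\<^bsub>Hmod R I M\<^esub> y) = a \<odot>\<^bsub>Hmod R I M\<^esub> x \<oplus>\<^bsub>Hmod R I M\<^esub> a \<odot>\<^bsub>Hmod R I M\<^esub> y"
      using Hmod_smult a p Hmod_add hsmult_Z hadd_Z Zset_carr
      by (auto simp: hadd_def hsmult_def smult_r_distr intro!: arg_cong[where f="Hclass R I M"] restrict_ext)
  next
    fix x assume "x \<in> carrier (Hmod R I M)"
    then obtain \<phi> where p: "\<phi> \<in> Zset R I M" "x = Hclass R I M \<phi>" unfolding HC by auto
    have "hsmult I M \<one> \<phi> = \<phi>"
    proof
      fix t show "hsmult I M \<one> \<phi> t = \<phi> t"
        using p Zset_carr[OF p(1)] Zset_ext[OF p(1)] by (cases "t \<in> I") (auto simp: hsmult_def)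
    qed
    then show "\<one> \<odot>\<^bsub>Hmod R I M\<^esub> x = x" using Hmod_smult[OF one_closed p(1)] p by simp
  qed
qed


lemma agree_gen:
  assumes IG: "I = Idl G" and G: "G \<subseteq> carrier R"
    and p: "\<phi> \<in> Zset R I M" and q: "\<psi> \<in> Zset R I M" and eq: "\<forall>g\<in>G. \<phi> g = \<psi> g"
  shows "\<forall>t\<in>I. \<phi> t = \<psi> t"
proof -
  interpret Iid: ideal I R using IG genideal_ideal[OF G] by simp
  define K where "K = {t\<in>I. \<phi> t = \<psi> t}"
  have zI: "\<zero> \<in> I" using Iid.I_l_closed[of \<zero> \<zero>] genideal_ideal[OF G] IG by (metis Iid.Icarr Iid.I_l_closed R.l_null R.zero_closed genideal_self G subsetD additive_subgroup.zero_closed ideal.axioms(1))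
  have z: "\<phi> \<zero> = \<zero>\<^bsub>M\<^esub>" if "\<phi> \<in> Zset R I M" for \<phi>
  proof -
    have "\<phi> \<zero> = \<zero> \<odot>\<^bsub>M\<^esub> \<phi> \<zero>" using ZsetD(3)[OF that R.zero_closed zI] by simp
    then show ?thesis using Zset_carr[OF that zI] by simp
  qed
  have mc: "x \<otimes> a \<in> K" if "a \<in> K" "x \<in> carrier R" for a x
    using that ZsetD(3)[OF p] ZsetD(3)[OF q] Iid.I_l_closed unfolding K_def by auto
  have "ideal K R"
  proof (rule idealI[OF R.ring_axioms])
    show "subgroup K (add_monoid R)"
    proof (rule R.add.subgroupI)
      show "K \<subseteq> carrier R" unfolding K_def using Iid.a_subset by auto
      have "\<zero> \<in> K" using z[OF p] z[OF q] zI unfolding K_def by simp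
      then show "K \<noteq> {}" by blast
    next
      fix a assume a: "a \<in> K"
      have "(\<ominus> \<one>) \<otimes> a \<in> K" using mc[OF a] by simp
      then show "\<ominus> a \<in> K"
        using a Iid.a_subset unfolding K_def by (auto simp: l_minus)
    next
      fix a b assume "a \<in> K" "b \<in> K"
      then show "a \<oplus> b \<in> K"
        unfolding K_def using ZsetD(2)[OF p] ZsetD(2)[OF q] Iid.a_closed by auto
    qed
  next
    fix a x assume "a \<in> K" "x \<in> carrier R"
    then show "x \<otimes> a \<in> K" "a \<otimes> x \<in> K" using mc Iid.a_subset m_comm unfolding K_def by auto
  qed
  moreover have "G \<subseteq> K" using genideal_self[OF G] eq IG unfolding K_def by auto
  ultimately have "Idl G \<subseteq> K" by (rule genideal_minimal)
  then show ?thesis using IG unfolding K_def by auto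
qed

end

lemma hctxI: "cring R \<Longrightarrow> ideal I R \<Longrightarrow> module R M \<Longrightarrow> hctx R M I"
  unfolding hctx_def hctx_axioms_def
  by (auto intro: ideal.I_l_closed ideal.I_r_closed additive_subgroup.a_closed ideal.axioms(1)
      dest: additive_subgroup.a_Hcarr[OF ideal.axioms(1)])

lemma Hmap_Hclass:
  assumes hM: "hctx R M I" and hN: "hctx R N I" and p: "\<phi> \<in> Zset R I M"
    and f: "\<And>x. x \<in> carrier M \<Longrightarrow> f x \<in> carrier N"
    and fa: "\<And>x y. x \<in> carrier M \<Longrightarrow> y \<in> carrier M \<Longrightarrow> f (x \<oplus>\<^bsub>M\<^esub> y) = f x \<oplus>\<^bsub>N\<^esub> f y"
    and fs: "\<And>r x. r \<in> carrier R \<Longrightarrow> x \<in> carrier M \<Longrightarrow> f (r \<odot>\<^bsub>M\<^esub> x) = r \<odot>\<^bsub>N\<^esub> f x"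
  shows "(\<lambda>t\<in>I. f (\<phi> t)) \<in> Zset R I N"
    and "Hmap R I N f (Hclass R I M \<phi>) = Hclass R I N (\<lambda>t\<in>I. f (\<phi> t))"
proof -
  interpret M: hctx R M I by fact
  interpret N: hctx R N I by fact
  have Z: "(\<lambda>t\<in>I. f (\<phi> t)) \<in> Zset R I N" if p: "\<phi> \<in> Zset R I M" for \<phi>
  proof (rule N.ZsetI)
    show "(\<lambda>t\<in>I. f (\<phi> t)) \<in> I \<rightarrow>\<^sub>E carrier N" using f M.Zset_carr[OF p] by auto
  next
    fix s t assume "s \<in> I" "t \<in> I" then show "(\<lambda>t\<in>I. f (\<phi> t)) (s \<oplus>\<^bsub>R\<^esub> t) = (\<lambda>t\<in>I. f (\<phi> t)) s \<oplus>\<^bsub>N\<^esub> (\<lambda>t\<in>I. f (\<phi> t)) t"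
      using M.I_add M.ZsetD(2)[OF p] fa M.Zset_carr[OF p] by auto
  next
    fix r t assume "r \<in> carrier R" "t \<in> I" then show "(\<lambda>t\<in>I. f (\<phi> t)) (r \<otimes>\<^bsub>R\<^esub> t) = r \<odot>\<^bsub>N\<^esub> (\<lambda>t\<in>I. f (\<phi> t)) t"
      using M.I_mult M.ZsetD(3)[OF p] fs M.Zset_carr[OF p] by auto
  next
    fix t assume t: "t \<in> I"
    then obtain m where "m \<in> carrier M" "\<phi> t = t \<odot>\<^bsub>M\<^esub> m" using M.ZsetD(4)[OF p] by blast
    then show "\<exists>m\<in>carrier N. (\<lambda>t\<in>I. f (\<phi> t)) t = t \<odot>\<^bsub>N\<^esub> m" using t fs f M.I_carr by auto
  qed
  show "(\<lambda>t\<in>I. f (\<phi> t)) \<in> Zset R I N" by (rule Z[OF p])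
  define \<psi> where "\<psi> = (SOME x. x \<in> Hclass R I M \<phi>)"
  have q: "\<psi> \<in> Zset R I M" "hrel I M \<phi> \<psi>" using M.some_rep[OF p] unfolding \<psi>_def by auto
  then obtain m where m: "m \<in> carrier M" "\<forall>t\<in>I. \<psi> t = \<phi> t \<oplus>\<^bsub>M\<^esub> t \<odot>\<^bsub>M\<^esub> m" unfolding hrel_def by auto
  have "hrel I N (\<lambda>t\<in>I. f (\<phi> t)) (\<lambda>t\<in>I. f (\<psi> t))"
    unfolding hrel_def using m fa fs f M.Zset_carr[OF p] M.I_carr by (auto intro!: bexI[of _ "f m"])
  then have "Hclass R I N (\<lambda>t\<in>I. f (\<psi> t)) = Hclass R I N (\<lambda>t\<in>I. f (\<phi> t))"
    using N.Hclass_eq[OF Z[OF q(1)] Z[OF p]] N.hrel_sym[OF Z[OF p] Z[OF q(1)]] by simp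
  then show "Hmap R I N f (Hclass R I M \<phi>) = Hclass R I N (\<lambda>t\<in>I. f (\<phi> t))"
    unfolding Hmap_def \<psi>_def[symmetric] by simp
qed


lemma mod_ag: "module R N \<Longrightarrow> abelian_group N"
  by (simp add: module_def)

lemma mod_facts:
  assumes "module R N"
  shows "\<And>x y. x \<in> carrier N \<Longrightarrow> y \<in> carrier N \<Longrightarrow> x \<oplus>\<^bsub>N\<^esub> y \<in> carrier N"
    and "\<zero>\<^bsub>N\<^esub> \<in> carrier N"
    and "\<And>x y z. x \<in> carrier N \<Longrightarrow> y \<in> carrier N \<Longrightarrow> z \<in> carrier N \<Longrightarrow> x \<oplus>\<^bsub>N\<^esub> y \<oplus>\<^bsub>N\<^esub> z = x \<oplus>\<^bsub>N\<^esub> (y \<oplus>\<^bsub>N\<^esub> z)"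
    and "\<And>x y. x \<in> carrier N \<Longrightarrow> y \<in> carrier N \<Longrightarrow> x \<oplus>\<^bsub>N\<^esub> y = y \<oplus>\<^bsub>N\<^esub> x"
    and "\<And>x. x \<in> carrier N \<Longrightarrow> \<zero>\<^bsub>N\<^esub> \<oplus>\<^bsub>N\<^esub> x = x"
    and "\<And>x. x \<in> carrier N \<Longrightarrow> \<ominus>\<^bsub>N\<^esub> x \<in> carrier N"
    and "\<And>x. x \<in> carrier N \<Longrightarrow> \<ominus>\<^bsub>N\<^esub> x \<oplus>\<^bsub>N\<^esub> x = \<zero>\<^bsub>N\<^esub>"
    and "\<And>a x. a \<in> carrier R \<Longrightarrow> x \<in> carrier N \<Longrightarrow> a \<odot>\<^bsub>N\<^esub> x \<in> carrier N"
    and "\<And>a b x. a \<in> carrier R \<Longrightarrow> b \<in> carrier R \<Longrightarrow> x \<in> carrier N \<Longrightarrow> (a \<oplus>\<^bsub>R\<^esub> b) \<odot>\<^bsub>N\<^esub> x = a \<odot>\<^bsub>N\<^esub> x \<oplus>\<^bsub>N\<^esub> b \<odot>\<^bsub>N\<^esub> x"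
    and "\<And>a x y. a \<in> carrier R \<Longrightarrow> x \<in> carrier N \<Longrightarrow> y \<in> carrier N \<Longrightarrow> a \<odot>\<^bsub>N\<^esub> (x \<oplus>\<^bsub>N\<^esub> y) = a \<odot>\<^bsub>N\<^esub> x \<oplus>\<^bsub>N\<^esub> a \<odot>\<^bsub>N\<^esub> y"
    and "\<And>a b x. a \<in> carrier R \<Longrightarrow> b \<in> carrier R \<Longrightarrow> x \<in> carrier N \<Longrightarrow> (a \<otimes>\<^bsub>R\<^esub> b) \<odot>\<^bsub>N\<^esub> x = a \<odot>\<^bsub>N\<^esub> (b \<odot>\<^bsub>N\<^esub> x)"
    and "\<And>x. x \<in> carrier N \<Longrightarrow> \<one>\<^bsub>R\<^esub> \<odot>\<^bsub>N\<^esub> x = x"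
    and "\<And>a x. a \<in> carrier R \<Longrightarrow> x \<in> carrier N \<Longrightarrow> (\<ominus>\<^bsub>R\<^esub> a) \<odot>\<^bsub>N\<^esub> x = \<ominus>\<^bsub>N\<^esub> (a \<odot>\<^bsub>N\<^esub> x)"
    and "\<And>a. a \<in> carrier R \<Longrightarrow> a \<odot>\<^bsub>N\<^esub> \<zero>\<^bsub>N\<^esub> = \<zero>\<^bsub>N\<^esub>"
    and "\<And>x. x \<in> carrier N \<Longrightarrow> \<zero>\<^bsub>R\<^esub> \<odot>\<^bsub>N\<^esub> x = \<zero>\<^bsub>N\<^esub>"
proof -
  interpret module R N by fact
  show "\<And>x y. x \<in> carrier N \<Longrightarrow> y \<in> carrier N \<Longrightarrow> x \<oplus>\<^bsub>N\<^esub> y \<in> carrier N"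
    and "\<zero>\<^bsub>N\<^esub> \<in> carrier N"
    and "\<And>x y z. x \<in> carrier N \<Longrightarrow> y \<in> carrier N \<Longrightarrow> z \<in> carrier N \<Longrightarrow> x \<oplus>\<^bsub>N\<^esub> y \<oplus>\<^bsub>N\<^esub> z = x \<oplus>\<^bsub>N\<^esub> (y \<oplus>\<^bsub>N\<^esub> z)"
    and "\<And>x y. x \<in> carrier N \<Longrightarrow> y \<in> carrier N \<Longrightarrow> x \<oplus>\<^bsub>N\<^esub> y = y \<oplus>\<^bsub>N\<^esub> x"
    and "\<And>x. x \<in> carrier N \<Longrightarrow> \<zero>\<^bsub>N\<^esub> \<oplus>\<^bsub>N\<^esub> x = x"
    and "\<And>x. x \<in> carrier N \<Longrightarrow> \<ominus>\<^bsub>N\<^esub> x \<in> carrier N"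
    and "\<And>x. x \<in> carrier N \<Longrightarrow> \<ominus>\<^bsub>N\<^esub> x \<oplus>\<^bsub>N\<^esub> x = \<zero>\<^bsub>N\<^esub>"
    and "\<And>a x. a \<in> carrier R \<Longrightarrow> x \<in> carrier N \<Longrightarrow> a \<odot>\<^bsub>N\<^esub> x \<in> carrier N"
    and "\<And>a b x. a \<in> carrier R \<Longrightarrow> b \<in> carrier R \<Longrightarrow> x \<in> carrier N \<Longrightarrow> (a \<oplus>\<^bsub>R\<^esub> b) \<odot>\<^bsub>N\<^esub> x = a \<odot>\<^bsub>N\<^esub> x \<oplus>\<^bsub>N\<^esub> b \<odot>\<^bsub>N\<^esub> x"
    and "\<And>a x y. a \<in> carrier R \<Longrightarrow> x \<in> carrier N \<Longrightarrow> y \<in> carrier N \<Longrightarrow> a \<odot>\<^bsub>N\<^esub> (x \<oplus>\<^bsub>N\<^esub> y) = a \<odot>\<^bsub>N\<^esub> x \<oplus>\<^bsub>N\<^esub> a \<odot>\<^bsub>N\<^esub> y"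
    and "\<And>a b x. a \<in> carrier R \<Longrightarrow> b \<in> carrier R \<Longrightarrow> x \<in> carrier N \<Longrightarrow> (a \<otimes>\<^bsub>R\<^esub> b) \<odot>\<^bsub>N\<^esub> x = a \<odot>\<^bsub>N\<^esub> (b \<odot>\<^bsub>N\<^esub> x)"
    and "\<And>x. x \<in> carrier N \<Longrightarrow> \<one>\<^bsub>R\<^esub> \<odot>\<^bsub>N\<^esub> x = x"
    and "\<And>a x. a \<in> carrier R \<Longrightarrow> x \<in> carrier N \<Longrightarrow> (\<ominus>\<^bsub>R\<^esub> a) \<odot>\<^bsub>N\<^esub> x = \<ominus>\<^bsub>N\<^esub> (a \<odot>\<^bsub>N\<^esub> x)"
    and "\<And>a. a \<in> carrier R \<Longrightarrow> a \<odot>\<^bsub>N\<^esub> \<zero>\<^bsub>N\<^esub> = \<zero>\<^bsub>N\<^esub>"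
    and "\<And>x. x \<in> carrier N \<Longrightarrow> \<zero>\<^bsub>R\<^esub> \<odot>\<^bsub>N\<^esub> x = \<zero>\<^bsub>N\<^esub>"
    by (auto simp: M.a_ac smult_l_distr smult_r_distr smult_assoc1 smult_l_minus M.r_neg)
qed

lemma prod_mod_simps:
  "carrier (prod_mod R \<Lambda> Ms) = Pi\<^sub>E \<Lambda> (\<lambda>l. carrier (Ms l))"
  "\<zero>\<^bsub>prod_mod R \<Lambda> Ms\<^esub> = (\<lambda>l\<in>\<Lambda>. \<zero>\<^bsub>Ms l\<^esub>)"
  "x \<oplus>\<^bsub>prod_mod R \<Lambda> Ms\<^esub> y = (\<lambda>l\<in>\<Lambda>. x l \<oplus>\<^bsub>Ms l\<^esub> y l)"
  "r \<odot>\<^bsub>prod_mod R \<Lambda> Ms\<^esub> x = (\<lambda>l\<in>\<Lambda>. r \<odot>\<^bsub>Ms l\<^esub> x l)"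
  unfolding prod_mod_def by simp_all

lemma prod_module:
  assumes R: "cring R" and Ms: "\<forall>l\<in>\<Lambda>. module R (Ms l)"
  shows "module R (prod_mod R \<Lambda> Ms)"
proof -
  note F = mod_facts[OF bspec[OF Ms]]
  have ag: "abelian_group (prod_mod R \<Lambda> Ms)"
  proof (rule abelian_groupI)
    fix x assume x: "x \<in> carrier (prod_mod R \<Lambda> Ms)"
    show "\<zero>\<^bsub>prod_mod R \<Lambda> Ms\<^esub> \<oplus>\<^bsub>prod_mod R \<Lambda> Ms\<^esub> x = x"
      using x F(5) unfolding prod_mod_simps by (auto simp: PiE_iff extensional_def fun_eq_iff)
    show "\<exists>y\<in>carrier (prod_mod R \<Lambda> Ms). y \<oplus>\<^bsub>prod_mod R \<Lambda> Ms\<^esub> x = \<zero>\<^bsub>prod_mod R \<Lambda> Ms\<^esub>"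
      using x F(6,7) unfolding prod_mod_simps
      by (auto simp: PiE_iff intro!: bexI[of _ "\<lambda>l\<in>\<Lambda>. \<ominus>\<^bsub>Ms l\<^esub> x l"] restrict_ext)
  qed (use F in \<open>auto simp: prod_mod_simps PiE_iff intro!: restrict_ext\<close>)
  show ?thesis
  proof (rule moduleI[OF R ag])
    fix x assume x: "x \<in> carrier (prod_mod R \<Lambda> Ms)"
    show "\<one>\<^bsub>R\<^esub> \<odot>\<^bsub>prod_mod R \<Lambda> Ms\<^esub> x = x"
      using x F(12) unfolding prod_mod_simps by (auto simp: PiE_iff extensional_def fun_eq_iff)
  qed (use F in \<open>auto simp: prod_mod_simps PiE_iff intro!: restrict_ext\<close>)
qed


lemma dsum_eq: "dsum_mod R \<Lambda> Ms = (prod_mod R \<Lambda> Ms)\<lparr>carrier := {x \<in> Pi\<^sub>E \<Lambda> (\<lambda>l. carrier (Ms l)). finite {l\<in>\<Lambda>. x l \<noteq> \<zero>\<^bsub>Ms l\<^esub>}}\<rparr>"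
  unfolding dsum_mod_def prod_mod_def by simp

lemma dsum_mod_simps:
  "carrier (dsum_mod R \<Lambda> Ms) = {x \<in> Pi\<^sub>E \<Lambda> (\<lambda>l. carrier (Ms l)). finite {l\<in>\<Lambda>. x l \<noteq> \<zero>\<^bsub>Ms l\<^esub>}}"
  "\<zero>\<^bsub>dsum_mod R \<Lambda> Ms\<^esub> = (\<lambda>l\<in>\<Lambda>. \<zero>\<^bsub>Ms l\<^esub>)"
  "x \<oplus>\<^bsub>dsum_mod R \<Lambda> Ms\<^esub> y = (\<lambda>l\<in>\<Lambda>. x l \<oplus>\<^bsub>Ms l\<^esub> y l)"
  "r \<odot>\<^bsub>dsum_mod R \<Lambda> Ms\<^esub> x = (\<lambda>l\<in>\<Lambda>. r \<odot>\<^bsub>Ms l\<^esub> x l)"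
  unfolding dsum_mod_def by simp_all

lemma dsum_module:
  assumes R: "cring R" and Ms: "\<forall>l\<in>\<Lambda>. module R (Ms l)"
  shows "module R (dsum_mod R \<Lambda> Ms)"
proof -
  note F = mod_facts[OF bspec[OF Ms]]
  interpret P: module R "prod_mod R \<Lambda> Ms" using prod_module[OF R Ms] .
  let ?C = "{x \<in> Pi\<^sub>E \<Lambda> (\<lambda>l. carrier (Ms l)). finite {l\<in>\<Lambda>. x l \<noteq> \<zero>\<^bsub>Ms l\<^esub>}}"
  have neg: "\<ominus>\<^bsub>prod_mod R \<Lambda> Ms\<^esub> x = (\<ominus>\<^bsub>R\<^esub> \<one>\<^bsub>R\<^esub>) \<odot>\<^bsub>prod_mod R \<Lambda> Ms\<^esub> x" if "x \<in> carrier (prod_mod R \<Lambda> Ms)" for x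
    using P.smult_l_minus[of "\<one>\<^bsub>R\<^esub>" x] that by simp
  have "submodule ?C R (prod_mod R \<Lambda> Ms)"
  proof (rule P.submoduleI)
    show "?C \<subseteq> carrier (prod_mod R \<Lambda> Ms)" unfolding prod_mod_simps by auto
    show "\<zero>\<^bsub>prod_mod R \<Lambda> Ms\<^esub> \<in> ?C" unfolding prod_mod_simps using F(2) by auto
  next
    fix a x assume a: "a \<in> carrier R" and x: "x \<in> ?C"
    have "{l\<in>\<Lambda>. a \<odot>\<^bsub>Ms l\<^esub> x l \<noteq> \<zero>\<^bsub>Ms l\<^esub>} \<subseteq> {l\<in>\<Lambda>. x l \<noteq> \<zero>\<^bsub>Ms l\<^esub>}" using F(14) a by auto
    then show "a \<odot>\<^bsub>prod_mod R \<Lambda> Ms\<^esub> x \<in> ?C" using x a F(8) unfolding prod_mod_simps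
      by (auto simp: PiE_iff intro: finite_subset)
  next
    fix x assume x: "x \<in> ?C"
    have c: "\<ominus>\<^bsub>R\<^esub> \<one>\<^bsub>R\<^esub> \<in> carrier R" using R cring.axioms(1) ring.ring_simprules(3,6) by metis
    have "{l\<in>\<Lambda>. (\<ominus>\<^bsub>R\<^esub> \<one>\<^bsub>R\<^esub>) \<odot>\<^bsub>Ms l\<^esub> x l \<noteq> \<zero>\<^bsub>Ms l\<^esub>} \<subseteq> {l\<in>\<Lambda>. x l \<noteq> \<zero>\<^bsub>Ms l\<^esub>}" using F(14) c by auto
    then show "\<ominus>\<^bsub>prod_mod R \<Lambda> Ms\<^esub> x \<in> ?C" using x c F(8) neg unfolding prod_mod_simps
      by (auto simp: PiE_iff intro: finite_subset)
  next
    fix x y assume x: "x \<in> ?C" and y: "y \<in> ?C"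
    have "{l\<in>\<Lambda>. x l \<oplus>\<^bsub>Ms l\<^esub> y l \<noteq> \<zero>\<^bsub>Ms l\<^esub>} \<subseteq> {l\<in>\<Lambda>. x l \<noteq> \<zero>\<^bsub>Ms l\<^esub>} \<union> {l\<in>\<Lambda>. y l \<noteq> \<zero>\<^bsub>Ms l\<^esub>}"
      using F(5) x y by (auto simp: PiE_iff)
    then show "x \<oplus>\<^bsub>prod_mod R \<Lambda> Ms\<^esub> y \<in> ?C" using x y F(1) unfolding prod_mod_simps
      by (auto simp: PiE_iff intro: finite_subset)
  qed
  then show ?thesis unfolding dsum_eq using submodule.submodule_is_module prod_module[OF R Ms] by blast
qed

lemma can_prod_Hclass:
  assumes hA: "hctx R A I" and hl: "\<forall>l\<in>\<Lambda>. hctx R (Ms l) I"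
    and carrA: "carrier A \<subseteq> Pi\<^sub>E \<Lambda> (\<lambda>l. carrier (Ms l))"
    and addA: "\<And>x y. x \<oplus>\<^bsub>A\<^esub> y = (\<lambda>l\<in>\<Lambda>. x l \<oplus>\<^bsub>Ms l\<^esub> y l)"
    and smA: "\<And>r x. r \<odot>\<^bsub>A\<^esub> x = (\<lambda>l\<in>\<Lambda>. r \<odot>\<^bsub>Ms l\<^esub> x l)"
    and p: "\<phi> \<in> Zset R I A"
  shows "\<And>l. l \<in> \<Lambda> \<Longrightarrow> (\<lambda>t\<in>I. \<phi> t l) \<in> Zset R I (Ms l)"
    and "can_prod R I \<Lambda> Ms (Hclass R I A \<phi>) = (\<lambda>l\<in>\<Lambda>. Hclass R I (Ms l) (\<lambda>t\<in>I. \<phi> t l))"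
proof -
  have *: "(\<lambda>t\<in>I. \<phi> t l) \<in> Zset R I (Ms l) \<and> Hmap R I (Ms l) (\<lambda>x. x l) (Hclass R I A \<phi>) = Hclass R I (Ms l) (\<lambda>t\<in>I. \<phi> t l)"
    if l: "l \<in> \<Lambda>" for l
    using Hmap_Hclass[OF hA hl[rule_format, OF l] p, of "\<lambda>x. x l"] carrA l by (auto simp: addA smA)
  then show "\<And>l. l \<in> \<Lambda> \<Longrightarrow> (\<lambda>t\<in>I. \<phi> t l) \<in> Zset R I (Ms l)" by blast
  show "can_prod R I \<Lambda> Ms (Hclass R I A \<phi>) = (\<lambda>l\<in>\<Lambda>. Hclass R I (Ms l) (\<lambda>t\<in>I. \<phi> t l))"
    unfolding can_prod_def using * by (auto intro!: restrict_ext)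
qed


lemma part1:
  assumes R: "cring R" and Iid: "ideal I R" and Ms: "\<forall>l\<in>\<Lambda>. module R (Ms l)"
  shows "is_mod_iso R (Hmod R I (prod_mod R \<Lambda> Ms)) (prod_mod R \<Lambda> (\<lambda>l. Hmod R I (Ms l)))
           (can_prod R I \<Lambda> Ms)"
proof -
  let ?P = "prod_mod R \<Lambda> Ms"
  let ?H = "Hmod R I ?P"
  let ?T = "prod_mod R \<Lambda> (\<lambda>l. Hmod R I (Ms l))"
  have hP: "hctx R ?P I" by (rule hctxI[OF R Iid prod_module[OF R Ms]])
  interpret HP: hctx R ?P I by (rule hP)
  have hl: "\<forall>l\<in>\<Lambda>. hctx R (Ms l) I" using hctxI[OF R Iid] Ms by blast
  note cp = can_prod_Hclass[OF hP hl _ prod_mod_simps(3) prod_mod_simps(4), unfolded prod_mod_simps(1), OF subset_refl]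
  have HC: "\<And>l Xa. l \<in> \<Lambda> \<Longrightarrow> Xa \<in> carrier (Hmod R I (Ms l)) \<longleftrightarrow> (\<exists>\<phi>\<in>Zset R I (Ms l). Xa = Hclass R I (Ms l) \<phi>)"
    using hctx.Hmod_carrier hl by blast
  have hfun: "can_prod R I \<Lambda> Ms Xa \<in> carrier ?T" if XH: "Xa \<in> carrier ?H" for Xa
  proof -
    obtain \<phi> where p: "\<phi> \<in> Zset R I ?P" "Xa = Hclass R I ?P \<phi>" using XH HP.Hmod_carrier by auto
    show ?thesis unfolding p(2) cp(2)[OF p(1)] prod_mod_simps using cp(1)[OF p(1)] HC by auto
  qed
  have add: "can_prod R I \<Lambda> Ms (Xa \<oplus>\<^bsub>?H\<^esub> Ya) = can_prod R I \<Lambda> Ms Xa \<oplus>\<^bsub>?T\<^esub> can_prod R I \<Lambda> Ms Ya"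
    if XH: "Xa \<in> carrier ?H" "Ya \<in> carrier ?H" for Xa Ya
  proof -
    obtain \<phi> where p: "\<phi> \<in> Zset R I ?P" "Xa = Hclass R I ?P \<phi>" using XH HP.Hmod_carrier by auto
    obtain \<psi> where q: "\<psi> \<in> Zset R I ?P" "Ya = Hclass R I ?P \<psi>" using XH HP.Hmod_carrier by auto
    have e: "(\<lambda>t\<in>I. hadd I ?P \<phi> \<psi> t l) = hadd I (Ms l) (\<lambda>t\<in>I. \<phi> t l) (\<lambda>t\<in>I. \<psi> t l)" if "l \<in> \<Lambda>" for l
      using that by (auto simp: hadd_def prod_mod_simps intro!: restrict_ext)
    show ?thesis unfolding p(2) q(2) HP.Hmod_add[OF p(1) q(1)] cp(2)[OF HP.hadd_Z[OF p(1) q(1)]]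
      cp(2)[OF p(1)] cp(2)[OF q(1)] prod_mod_simps
      using e hctx.Hmod_add[OF bspec[OF hl] cp(1)[OF p(1)] cp(1)[OF q(1)]]
      by (auto intro!: restrict_ext)
  qed
  have sm: "can_prod R I \<Lambda> Ms (r \<odot>\<^bsub>?H\<^esub> Xa) = r \<odot>\<^bsub>?T\<^esub> can_prod R I \<Lambda> Ms Xa"
    if rX: "r \<in> carrier R" "Xa \<in> carrier ?H" for r Xa
  proof -
    obtain \<phi> where p: "\<phi> \<in> Zset R I ?P" "Xa = Hclass R I ?P \<phi>" using rX HP.Hmod_carrier by auto
    have e: "(\<lambda>t\<in>I. hsmult I ?P r \<phi> t l) = hsmult I (Ms l) r (\<lambda>t\<in>I. \<phi> t l)" if "l \<in> \<Lambda>" for l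
      using that by (auto simp: hsmult_def prod_mod_simps intro!: restrict_ext)
    show ?thesis unfolding p(2) HP.Hmod_smult[OF rX(1) p(1)] cp(2)[OF HP.hsmult_Z[OF rX(1) p(1)]]
      cp(2)[OF p(1)] prod_mod_simps
      using e hctx.Hmod_smult[OF bspec[OF hl] rX(1) cp(1)[OF p(1)]]
      by (auto intro!: restrict_ext)
  qed
  have inj: "inj_on (can_prod R I \<Lambda> Ms) (carrier ?H)"
  proof (rule inj_onI)
    fix Xa Ya assume Xa: "Xa \<in> carrier ?H" and Ya: "Ya \<in> carrier ?H" and eq: "can_prod R I \<Lambda> Ms Xa = can_prod R I \<Lambda> Ms Ya"
    obtain \<phi> where p: "\<phi> \<in> Zset R I ?P" "Xa = Hclass R I ?P \<phi>" using Xa HP.Hmod_carrier by auto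
    obtain \<psi> where q: "\<psi> \<in> Zset R I ?P" "Ya = Hclass R I ?P \<psi>" using Ya HP.Hmod_carrier by auto
    have "\<forall>l\<in>\<Lambda>. \<exists>m\<in>carrier (Ms l). \<forall>t\<in>I. \<psi> t l = \<phi> t l \<oplus>\<^bsub>Ms l\<^esub> t \<odot>\<^bsub>Ms l\<^esub> m"
    proof
      fix l assume l: "l \<in> \<Lambda>"
      have "Hclass R I (Ms l) (\<lambda>t\<in>I. \<phi> t l) = Hclass R I (Ms l) (\<lambda>t\<in>I. \<psi> t l)"
        using fun_cong[OF eq, of l] l unfolding p(2) q(2) cp(2)[OF p(1)] cp(2)[OF q(1)] by simp
      then have "hrel I (Ms l) (\<lambda>t\<in>I. \<phi> t l) (\<lambda>t\<in>I. \<psi> t l)"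
        using hctx.Hclass_eq[OF bspec[OF hl l] cp(1)[OF p(1) l] cp(1)[OF q(1) l]] by simp
      then show "\<exists>m\<in>carrier (Ms l). \<forall>t\<in>I. \<psi> t l = \<phi> t l \<oplus>\<^bsub>Ms l\<^esub> t \<odot>\<^bsub>Ms l\<^esub> m"
        unfolding hrel_def by auto
    qed
    then obtain m where m: "\<forall>l\<in>\<Lambda>. m l \<in> carrier (Ms l) \<and> (\<forall>t\<in>I. \<psi> t l = \<phi> t l \<oplus>\<^bsub>Ms l\<^esub> t \<odot>\<^bsub>Ms l\<^esub> m l)"
      by metis
    have "hrel I ?P \<phi> \<psi>" unfolding hrel_def
    proof (intro bexI ballI)
      show "restrict m \<Lambda> \<in> carrier ?P" using m unfolding prod_mod_simps by auto
      fix t assume t: "t \<in> I"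
      show "\<psi> t = \<phi> t \<oplus>\<^bsub>?P\<^esub> t \<odot>\<^bsub>?P\<^esub> restrict m \<Lambda>"
        using HP.Zset_carr[OF q(1) t] m t unfolding prod_mod_simps
        by (auto simp: PiE_iff extensional_def fun_eq_iff)
    qed
    then show "Xa = Ya" unfolding p(2) q(2) using HP.Hclass_eq[OF p(1) q(1)] by simp
  qed
  have surj: "carrier ?T \<subseteq> can_prod R I \<Lambda> Ms ` carrier ?H"
  proof
    fix x assume x: "x \<in> carrier ?T"
    have "\<forall>l\<in>\<Lambda>. \<exists>\<Phi>\<in>Zset R I (Ms l). x l = Hclass R I (Ms l) \<Phi>"
      using x HC unfolding prod_mod_simps by auto
    then obtain \<Phi> where Phi: "\<forall>l\<in>\<Lambda>. \<Phi> l \<in> Zset R I (Ms l) \<and> x l = Hclass R I (Ms l) (\<Phi> l)" by metis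
    define \<phi> where "\<phi> = (\<lambda>t\<in>I. \<lambda>l\<in>\<Lambda>. \<Phi> l t)"
    have Zl: "\<And>l. l \<in> \<Lambda> \<Longrightarrow> \<Phi> l \<in> Zset R I (Ms l)" using Phi by auto
    have p: "\<phi> \<in> Zset R I ?P"
    proof (rule HP.ZsetI)
      show "\<phi> \<in> I \<rightarrow>\<^sub>E carrier ?P" unfolding \<phi>_def prod_mod_simps
        using hctx.Zset_carr[OF bspec[OF hl] Zl] by auto
    next
      fix s t assume "s \<in> I" "t \<in> I"
      then show "\<phi> (s \<oplus>\<^bsub>R\<^esub> t) = \<phi> s \<oplus>\<^bsub>?P\<^esub> \<phi> t" unfolding \<phi>_def prod_mod_simps
        using hctx.ZsetD(2)[OF bspec[OF hl] Zl] HP.I_add by (auto intro!: restrict_ext)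
    next
      fix r t assume "r \<in> carrier R" "t \<in> I"
      then show "\<phi> (r \<otimes>\<^bsub>R\<^esub> t) = r \<odot>\<^bsub>?P\<^esub> \<phi> t" unfolding \<phi>_def prod_mod_simps
        using hctx.ZsetD(3)[OF bspec[OF hl] Zl] HP.I_mult by (auto intro!: restrict_ext)
    next
      fix t assume t: "t \<in> I"
      have "\<forall>l\<in>\<Lambda>. \<exists>m\<in>carrier (Ms l). \<Phi> l t = t \<odot>\<^bsub>Ms l\<^esub> m"
        using hctx.ZsetD(4)[OF bspec[OF hl] Zl t] by blast
      then obtain m where m: "\<forall>l\<in>\<Lambda>. m l \<in> carrier (Ms l) \<and> \<Phi> l t = t \<odot>\<^bsub>Ms l\<^esub> m l" by metis
      show "\<exists>m\<in>carrier ?P. \<phi> t = t \<odot>\<^bsub>?P\<^esub> m"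
        using m t unfolding \<phi>_def prod_mod_simps by (auto intro!: bexI[of _ "restrict m \<Lambda>"] restrict_ext)
    qed
    have "can_prod R I \<Lambda> Ms (Hclass R I ?P \<phi>) = x"
    proof -
      have e: "(\<lambda>t\<in>I. \<phi> t l) = \<Phi> l" if "l \<in> \<Lambda>" for l
        using hctx.Zset_ext[OF bspec[OF hl that] Zl[OF that]] that unfolding \<phi>_def by auto
      show ?thesis unfolding cp(2)[OF p]
      proof
        fix l show "(\<lambda>l\<in>\<Lambda>. Hclass R I (Ms l) (\<lambda>t\<in>I. \<phi> t l)) l = x l"
          using Phi x e unfolding prod_mod_simps by (cases "l \<in> \<Lambda>") (auto simp: PiE_iff extensional_def)
      qed
    qed
    moreover have "Hclass R I ?P \<phi> \<in> carrier ?H" using p HP.Hmod_carrier by auto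
    ultimately show "x \<in> can_prod R I \<Lambda> Ms ` carrier ?H" by blast
  qed
  show ?thesis unfolding is_mod_iso_def is_mod_hom_def bij_betw_def
    using hfun add sm inj surj by auto
qed


lemma part2:
  assumes R: "cring R" and Iid: "ideal I R" and Ms: "\<forall>l\<in>\<Lambda>. module R (Ms l)"
    and fg: "fin_gen_ideal R I"
  shows "is_mod_iso R (Hmod R I (dsum_mod R \<Lambda> Ms)) (dsum_mod R \<Lambda> (\<lambda>l. Hmod R I (Ms l)))
           (can_prod R I \<Lambda> Ms)"
proof -
  let ?P = "dsum_mod R \<Lambda> Ms"
  let ?H = "Hmod R I ?P"
  let ?T = "dsum_mod R \<Lambda> (\<lambda>l. Hmod R I (Ms l))"
  obtain G where G: "finite G" "G \<subseteq> carrier R" "I = Idl\<^bsub>R\<^esub> G" using fg unfolding fin_gen_ideal_def by auto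
  have GI: "G \<subseteq> I" using G ring.genideal_self[OF cring.axioms(1)[OF R]] by auto
  have hP: "hctx R ?P I" by (rule hctxI[OF R Iid dsum_module[OF R Ms]])
  interpret HP: hctx R ?P I by (rule hP)
  have hl: "\<forall>l\<in>\<Lambda>. hctx R (Ms l) I" using hctxI[OF R Iid] Ms by blast
  have sub: "carrier ?P \<subseteq> Pi\<^sub>E \<Lambda> (\<lambda>l. carrier (Ms l))" unfolding dsum_mod_simps by auto
  note cp = can_prod_Hclass[OF hP hl sub dsum_mod_simps(3) dsum_mod_simps(4)]
  have HC: "\<And>l Xa. l \<in> \<Lambda> \<Longrightarrow> Xa \<in> carrier (Hmod R I (Ms l)) \<longleftrightarrow> (\<exists>\<phi>\<in>Zset R I (Ms l). Xa = Hclass R I (Ms l) \<phi>)"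
    using hctx.Hmod_carrier hl by blast
  have z0: "\<And>l. l \<in> \<Lambda> \<Longrightarrow> (\<lambda>t\<in>I. \<zero>\<^bsub>Ms l\<^esub>) \<in> Zset R I (Ms l)"
    using hctx.zero_B hctx.B_Z hl by blast
  define F where "F = (\<lambda>\<phi>. \<Union>g\<in>G. {l\<in>\<Lambda>. \<phi> g l \<noteq> \<zero>\<^bsub>Ms l\<^esub>})"
  have Ffin: "finite (F \<phi>)" if p: "\<phi> \<in> Zset R I ?P" for \<phi>
    unfolding F_def using G(1) HP.Zset_carr[OF p] GI unfolding dsum_mod_simps by auto
  have Fz: "\<phi> t l = \<zero>\<^bsub>Ms l\<^esub>" if p: "\<phi> \<in> Zset R I ?P" and l: "l \<in> \<Lambda>" "l \<notin> F \<phi>" and t: "t \<in> I" for \<phi> l t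
  proof -
    have "\<forall>t\<in>I. (\<lambda>t\<in>I. \<phi> t l) t = (\<lambda>t\<in>I. \<zero>\<^bsub>Ms l\<^esub>) t"
      using hctx.agree_gen[OF bspec[OF hl l(1)] G(3) G(2) cp(1)[OF p l(1)] z0[OF l(1)]] l GI unfolding F_def by auto
    then show ?thesis using t by auto
  qed
  have hfun: "can_prod R I \<Lambda> Ms Xa \<in> carrier ?T" if XH: "Xa \<in> carrier ?H" for Xa
  proof -
    obtain \<phi> where p: "\<phi> \<in> Zset R I ?P" "Xa = Hclass R I ?P \<phi>" using XH HP.Hmod_carrier by auto
    have "{l\<in>\<Lambda>. Hclass R I (Ms l) (\<lambda>t\<in>I. \<phi> t l) \<noteq> \<zero>\<^bsub>Hmod R I (Ms l)\<^esub>} \<subseteq> F \<phi>"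
    proof (rule subsetI, rule ccontr)
      fix l assume l: "l \<in> {l\<in>\<Lambda>. Hclass R I (Ms l) (\<lambda>t\<in>I. \<phi> t l) \<noteq> \<zero>\<^bsub>Hmod R I (Ms l)\<^esub>}" "l \<notin> F \<phi>"
      have "Hclass R I (Ms l) (\<lambda>t\<in>I. \<phi> t l) = \<zero>\<^bsub>Hmod R I (Ms l)\<^esub>"
        unfolding hctx.Hclass_zero_iff[OF bspec[OF hl] cp(1)[OF p(1)], OF conjunct1[OF l(1)[simplified]] conjunct1[OF l(1)[simplified]]]
        using Fz[OF p(1)] l mod_facts(2,14)[OF bspec[OF Ms]] hctx.I_carr[OF bspec[OF hl]]
        by (auto intro!: bexI[of _ "\<zero>\<^bsub>Ms l\<^esub>"])
      then show False using l by auto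
    qed
    then show ?thesis unfolding p(2) cp(2)[OF p(1)] dsum_mod_simps using cp(1)[OF p(1)] HC Ffin[OF p(1)]
      by (auto intro: finite_subset) (use cp(1)[OF p(1)] in blast)
  qed
  have add: "can_prod R I \<Lambda> Ms (Xa \<oplus>\<^bsub>?H\<^esub> Ya) = can_prod R I \<Lambda> Ms Xa \<oplus>\<^bsub>?T\<^esub> can_prod R I \<Lambda> Ms Ya"
    if XH: "Xa \<in> carrier ?H" "Ya \<in> carrier ?H" for Xa Ya
  proof -
    obtain \<phi> where p: "\<phi> \<in> Zset R I ?P" "Xa = Hclass R I ?P \<phi>" using XH HP.Hmod_carrier by auto
    obtain \<psi> where q: "\<psi> \<in> Zset R I ?P" "Ya = Hclass R I ?P \<psi>" using XH HP.Hmod_carrier by auto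
    have e: "(\<lambda>t\<in>I. hadd I ?P \<phi> \<psi> t l) = hadd I (Ms l) (\<lambda>t\<in>I. \<phi> t l) (\<lambda>t\<in>I. \<psi> t l)" if "l \<in> \<Lambda>" for l
      using that by (auto simp: hadd_def dsum_mod_simps intro!: restrict_ext)
    show ?thesis unfolding p(2) q(2) HP.Hmod_add[OF p(1) q(1)] cp(2)[OF HP.hadd_Z[OF p(1) q(1)]]
      cp(2)[OF p(1)] cp(2)[OF q(1)] dsum_mod_simps
      using e hctx.Hmod_add[OF bspec[OF hl] cp(1)[OF p(1)] cp(1)[OF q(1)]]
      by (auto intro!: restrict_ext)
  qed
  have sm: "can_prod R I \<Lambda> Ms (r \<odot>\<^bsub>?H\<^esub> Xa) = r \<odot>\<^bsub>?T\<^esub> can_prod R I \<Lambda> Ms Xa"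
    if rX: "r \<in> carrier R" "Xa \<in> carrier ?H" for r Xa
  proof -
    obtain \<phi> where p: "\<phi> \<in> Zset R I ?P" "Xa = Hclass R I ?P \<phi>" using rX HP.Hmod_carrier by auto
    have e: "(\<lambda>t\<in>I. hsmult I ?P r \<phi> t l) = hsmult I (Ms l) r (\<lambda>t\<in>I. \<phi> t l)" if "l \<in> \<Lambda>" for l
      using that by (auto simp: hsmult_def dsum_mod_simps intro!: restrict_ext)
    show ?thesis unfolding p(2) HP.Hmod_smult[OF rX(1) p(1)] cp(2)[OF HP.hsmult_Z[OF rX(1) p(1)]]
      cp(2)[OF p(1)] dsum_mod_simps
      using e hctx.Hmod_smult[OF bspec[OF hl] rX(1) cp(1)[OF p(1)]]
      by (auto intro!: restrict_ext)
  qed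
  have inj: "inj_on (can_prod R I \<Lambda> Ms) (carrier ?H)"
  proof (rule inj_onI)
    fix Xa Ya assume Xa: "Xa \<in> carrier ?H" and Ya: "Ya \<in> carrier ?H" and eq: "can_prod R I \<Lambda> Ms Xa = can_prod R I \<Lambda> Ms Ya"
    obtain \<phi> where p: "\<phi> \<in> Zset R I ?P" "Xa = Hclass R I ?P \<phi>" using Xa HP.Hmod_carrier by auto
    obtain \<psi> where q: "\<psi> \<in> Zset R I ?P" "Ya = Hclass R I ?P \<psi>" using Ya HP.Hmod_carrier by auto
    have "\<forall>l\<in>\<Lambda>. \<exists>m\<in>carrier (Ms l). \<forall>t\<in>I. \<psi> t l = \<phi> t l \<oplus>\<^bsub>Ms l\<^esub> t \<odot>\<^bsub>Ms l\<^esub> m"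
    proof
      fix l assume l: "l \<in> \<Lambda>"
      have "Hclass R I (Ms l) (\<lambda>t\<in>I. \<phi> t l) = Hclass R I (Ms l) (\<lambda>t\<in>I. \<psi> t l)"
        using fun_cong[OF eq, of l] l unfolding p(2) q(2) cp(2)[OF p(1)] cp(2)[OF q(1)] by simp
      then have "hrel I (Ms l) (\<lambda>t\<in>I. \<phi> t l) (\<lambda>t\<in>I. \<psi> t l)"
        using hctx.Hclass_eq[OF bspec[OF hl l] cp(1)[OF p(1) l] cp(1)[OF q(1) l]] by simp
      then show "\<exists>m\<in>carrier (Ms l). \<forall>t\<in>I. \<psi> t l = \<phi> t l \<oplus>\<^bsub>Ms l\<^esub> t \<odot>\<^bsub>Ms l\<^esub> m"
        unfolding hrel_def by auto
    qed
    then obtain m where m: "\<forall>l\<in>\<Lambda>. m l \<in> carrier (Ms l) \<and> (\<forall>t\<in>I. \<psi> t l = \<phi> t l \<oplus>\<^bsub>Ms l\<^esub> t \<odot>\<^bsub>Ms l\<^esub> m l)"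
      by metis
    define FF where "FF = F \<phi> \<union> F \<psi>"
    define m' where "m' = (\<lambda>l\<in>\<Lambda>. if l \<in> FF then m l else \<zero>\<^bsub>Ms l\<^esub>)"
    have "hrel I ?P \<phi> \<psi>" unfolding hrel_def
    proof (intro bexI ballI)
      have "{l\<in>\<Lambda>. m' l \<noteq> \<zero>\<^bsub>Ms l\<^esub>} \<subseteq> FF" unfolding m'_def by auto
      then show "m' \<in> carrier ?P" using m Ffin[OF p(1)] Ffin[OF q(1)] mod_facts(2)[OF bspec[OF Ms]]
        unfolding dsum_mod_simps FF_def m'_def by (auto intro: finite_subset)
      fix t assume t: "t \<in> I"
      show "\<psi> t = \<phi> t \<oplus>\<^bsub>?P\<^esub> t \<odot>\<^bsub>?P\<^esub> m'"
      proof
        fix l show "\<psi> t l = (\<phi> t \<oplus>\<^bsub>?P\<^esub> t \<odot>\<^bsub>?P\<^esub> m') l"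
        proof (cases "l \<in> \<Lambda>")
          case l: True
          show ?thesis
          proof (cases "l \<in> FF")
            case True then show ?thesis using m l t unfolding dsum_mod_simps m'_def by auto
          next
            case False
            then show ?thesis using Fz[OF p(1) l _ t] Fz[OF q(1) l _ t] l t
               mod_facts(2,5,14)[OF bspec[OF Ms]] hctx.I_carr[OF bspec[OF hl]]
              unfolding dsum_mod_simps m'_def FF_def by auto
          qed
        next
          case False then show ?thesis using HP.Zset_carr[OF q(1) t] unfolding dsum_mod_simps
            by (auto simp: PiE_iff extensional_def)
        qed
      qed
    qed
    then show "Xa = Ya" unfolding p(2) q(2) using HP.Hclass_eq[OF p(1) q(1)] by simp
  qed
  have surj: "carrier ?T \<subseteq> can_prod R I \<Lambda> Ms ` carrier ?H"
  proof
    fix x assume x: "x \<in> carrier ?T"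
    define Fx where "Fx = {l\<in>\<Lambda>. x l \<noteq> \<zero>\<^bsub>Hmod R I (Ms l)\<^esub>}"
    have Fxfin: "finite Fx" using x unfolding Fx_def dsum_mod_simps by auto
    have "\<forall>l\<in>\<Lambda>. \<exists>\<Phi>\<in>Zset R I (Ms l). x l = Hclass R I (Ms l) \<Phi>"
      using x HC unfolding dsum_mod_simps by (auto simp: PiE_iff)
    then obtain \<Phi>0 where Phi0: "\<forall>l\<in>\<Lambda>. \<Phi>0 l \<in> Zset R I (Ms l) \<and> x l = Hclass R I (Ms l) (\<Phi>0 l)" by metis
    define \<Phi> where "\<Phi> = (\<lambda>l. if l \<in> Fx then \<Phi>0 l else (\<lambda>t\<in>I. \<zero>\<^bsub>Ms l\<^esub>))"
    have Phi: "\<forall>l\<in>\<Lambda>. \<Phi> l \<in> Zset R I (Ms l) \<and> x l = Hclass R I (Ms l) (\<Phi> l)"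
      using Phi0 z0 hctx.Hmod_zero[OF bspec[OF hl]] unfolding \<Phi>_def Fx_def by auto
    have Phiz: "\<And>l t. l \<in> \<Lambda> \<Longrightarrow> l \<notin> Fx \<Longrightarrow> t \<in> I \<Longrightarrow> \<Phi> l t = \<zero>\<^bsub>Ms l\<^esub>" unfolding \<Phi>_def by auto
    define \<phi> where "\<phi> = (\<lambda>t\<in>I. \<lambda>l\<in>\<Lambda>. \<Phi> l t)"
    have Zl: "\<And>l. l \<in> \<Lambda> \<Longrightarrow> \<Phi> l \<in> Zset R I (Ms l)" using Phi by auto
    have p: "\<phi> \<in> Zset R I ?P"
    proof (rule HP.ZsetI)
      have "\<phi> t \<in> carrier ?P" if t: "t \<in> I" for t
      proof -
        have "{l\<in>\<Lambda>. \<Phi> l t \<noteq> \<zero>\<^bsub>Ms l\<^esub>} \<subseteq> Fx" using Phiz t by auto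
        then show ?thesis unfolding \<phi>_def dsum_mod_simps
          using hctx.Zset_carr[OF bspec[OF hl] Zl] t Fxfin by (auto intro: finite_subset)
      qed
      then show "\<phi> \<in> I \<rightarrow>\<^sub>E carrier ?P" unfolding \<phi>_def by auto
    next
      fix s t assume "s \<in> I" "t \<in> I"
      then show "\<phi> (s \<oplus>\<^bsub>R\<^esub> t) = \<phi> s \<oplus>\<^bsub>?P\<^esub> \<phi> t" unfolding \<phi>_def dsum_mod_simps
        using hctx.ZsetD(2)[OF bspec[OF hl] Zl] HP.I_add by (auto intro!: restrict_ext)
    next
      fix r t assume "r \<in> carrier R" "t \<in> I"
      then show "\<phi> (r \<otimes>\<^bsub>R\<^esub> t) = r \<odot>\<^bsub>?P\<^esub> \<phi> t" unfolding \<phi>_def dsum_mod_simps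
        using hctx.ZsetD(3)[OF bspec[OF hl] Zl] HP.I_mult by (auto intro!: restrict_ext)
    next
      fix t assume t: "t \<in> I"
      have "\<forall>l\<in>\<Lambda>. \<exists>m\<in>carrier (Ms l). \<Phi> l t = t \<odot>\<^bsub>Ms l\<^esub> m"
        using hctx.ZsetD(4)[OF bspec[OF hl] Zl t] by blast
      then obtain m where m: "\<forall>l\<in>\<Lambda>. m l \<in> carrier (Ms l) \<and> \<Phi> l t = t \<odot>\<^bsub>Ms l\<^esub> m l" by metis
      define m' where "m' = (\<lambda>l\<in>\<Lambda>. if l \<in> Fx then m l else \<zero>\<^bsub>Ms l\<^esub>)"
      have "{l\<in>\<Lambda>. m' l \<noteq> \<zero>\<^bsub>Ms l\<^esub>} \<subseteq> Fx" unfolding m'_def by auto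
      then have m'c: "m' \<in> carrier ?P" unfolding dsum_mod_simps m'_def using m Fxfin mod_facts(2)[OF bspec[OF Ms]]
        by (auto intro: finite_subset)
      have "\<phi> t = t \<odot>\<^bsub>?P\<^esub> m'"
        unfolding \<phi>_def dsum_mod_simps m'_def using m t Phiz mod_facts(14)[OF bspec[OF Ms]] hctx.I_carr[OF bspec[OF hl]]
        by (auto intro!: restrict_ext)
      then show "\<exists>m\<in>carrier ?P. \<phi> t = t \<odot>\<^bsub>?P\<^esub> m" using m'c by blast
    qed
    have "can_prod R I \<Lambda> Ms (Hclass R I ?P \<phi>) = x"
    proof -
      have e: "(\<lambda>t\<in>I. \<phi> t l) = \<Phi> l" if "l \<in> \<Lambda>" for l
        using hctx.Zset_ext[OF bspec[OF hl that] Zl[OF that]] that unfolding \<phi>_def by auto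
      show ?thesis unfolding cp(2)[OF p]
      proof
        fix l show "(\<lambda>l\<in>\<Lambda>. Hclass R I (Ms l) (\<lambda>t\<in>I. \<phi> t l)) l = x l"
          using Phi x e unfolding dsum_mod_simps by (cases "l \<in> \<Lambda>") (auto simp: PiE_iff extensional_def)
      qed
    qed
    moreover have "Hclass R I ?P \<phi> \<in> carrier ?H" using p HP.Hmod_carrier by auto
    ultimately show "x \<in> can_prod R I \<Lambda> Ms ` carrier ?H" by blast
  qed
  show ?thesis unfolding is_mod_iso_def is_mod_hom_def bij_betw_def
    using hfun add sm inj surj by auto
qed


locale qctx = module +
  fixes I J
  assumes Iid: "ideal I R" and Jdef: "J = ann_mod R M"
begin

lemma J_ideal: "ideal J R"
proof (rule idealI[OF R.ring_axioms])
  show "subgroup J (add_monoid R)"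
  proof (rule R.add.subgroupI)
    show "J \<subseteq> carrier R" unfolding Jdef ann_mod_def by auto
    show "J \<noteq> {}" unfolding Jdef ann_mod_def by (auto intro!: exI[of _ \<zero>])
  next
    fix a assume "a \<in> J" then show "\<ominus> a \<in> J" unfolding Jdef ann_mod_def by (auto simp: smult_l_minus)
  next
    fix a b assume "a \<in> J" "b \<in> J" then show "a \<oplus> b \<in> J" unfolding Jdef ann_mod_def by (auto simp: smult_l_distr)
  qed
next
  fix a x assume "a \<in> J" "x \<in> carrier R"
  then show "x \<otimes> a \<in> J" "a \<otimes> x \<in> J" unfolding Jdef ann_mod_def by (auto simp: smult_assoc1 m_comm)
qed

sublocale J: ideal J R by (rule J_ideal)
sublocale II: ideal I R by (rule Iid)

lemma Jann: "j \<in> J \<Longrightarrow> m \<in> carrier M \<Longrightarrow> j \<odot>\<^bsub>M\<^esub> m = \<zero>\<^bsub>M\<^esub>"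
  unfolding Jdef ann_mod_def by auto

lemma rcos_mem: "r \<in> carrier R \<Longrightarrow> x \<in> J +> r \<longleftrightarrow> (\<exists>j\<in>J. x = j \<oplus> r)"
  unfolding a_r_coset_def' by auto

lemma qsm: assumes "r \<in> carrier R" "m \<in> carrier M"
  shows "(J +> r) \<odot>\<^bsub>quot_mod R J M\<^esub> m = r \<odot>\<^bsub>M\<^esub> m"
proof -
  have "(SOME x. x \<in> J +> r) \<in> J +> r" using J.a_rcos_self[OF assms(1)] by (rule someI[where P="\<lambda>x. x \<in> J +> r"])
  then obtain j where j: "j \<in> J" "(SOME x. x \<in> J +> r) = j \<oplus> r" using rcos_mem assms by auto
  show ?thesis unfolding quot_mod_def using j assms Jann by (simp add: smult_l_distr)
qed

lemma Q_carrier: "c \<in> carrier (R Quot J) \<longleftrightarrow> (\<exists>r\<in>carrier R. c = J +> r)"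
  unfolding FactRing_def A_RCOSETS_def' by auto

lemma Q_add: "a \<in> carrier R \<Longrightarrow> b \<in> carrier R \<Longrightarrow> (J +> a) \<oplus>\<^bsub>R Quot J\<^esub> (J +> b) = J +> (a \<oplus> b)"
  unfolding FactRing_def using J.a_rcos_sum by simp

lemma Q_mult: "a \<in> carrier R \<Longrightarrow> b \<in> carrier R \<Longrightarrow> (J +> a) \<otimes>\<^bsub>R Quot J\<^esub> (J +> b) = J +> (a \<otimes> b)"
  unfolding FactRing_def using J.rcoset_mult_add by simp

lemma Q_one: "\<one>\<^bsub>R Quot J\<^esub> = J +> \<one>" unfolding FactRing_def by simp

lemma Q_cring: "cring (R Quot J)" using J.quotient_is_cring is_cring by blast

lemma qM_simps: "carrier (quot_mod R J M) = carrier M" "x \<oplus>\<^bsub>quot_mod R J M\<^esub> y = x \<oplus>\<^bsub>M\<^esub> y" "\<zero>\<^bsub>quot_mod R J M\<^esub> = \<zero>\<^bsub>M\<^esub>"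
  unfolding quot_mod_def by simp_all

lemma qM_module: "module (R Quot J) (quot_mod R J M)"
proof (rule moduleI[OF Q_cring])
  show "abelian_group (quot_mod R J M)"
  proof (rule abelian_groupI, simp_all only: qM_simps)
    fix x assume "x \<in> carrier M"
    then show "\<exists>y\<in>carrier M. y \<oplus>\<^bsub>M\<^esub> x = \<zero>\<^bsub>M\<^esub>" using M.l_neg M.a_inv_closed by blast
  qed (simp_all add: M.a_ac)
next
  fix a x assume "a \<in> carrier (R Quot J)" "x \<in> carrier (quot_mod R J M)"
  then show "a \<odot>\<^bsub>quot_mod R J M\<^esub> x \<in> carrier (quot_mod R J M)" using qsm Q_carrier qM_simps by auto
next
  fix a b x assume "a \<in> carrier (R Quot J)" "b \<in> carrier (R Quot J)" "x \<in> carrier (quot_mod R J M)"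
  then obtain a' b' where "a' \<in> carrier R" "b' \<in> carrier R" "a = J +> a'" "b = J +> b'" "x \<in> carrier M"
    using Q_carrier qM_simps by auto
  then show "(a \<oplus>\<^bsub>R Quot J\<^esub> b) \<odot>\<^bsub>quot_mod R J M\<^esub> x = a \<odot>\<^bsub>quot_mod R J M\<^esub> x \<oplus>\<^bsub>quot_mod R J M\<^esub> b \<odot>\<^bsub>quot_mod R J M\<^esub> x"
    and "(a \<otimes>\<^bsub>R Quot J\<^esub> b) \<odot>\<^bsub>quot_mod R J M\<^esub> x = a \<odot>\<^bsub>quot_mod R J M\<^esub> (b \<odot>\<^bsub>quot_mod R J M\<^esub> x)"
    using Q_add Q_mult qsm qM_simps by (simp_all add: smult_l_distr smult_assoc1)
next
  fix a x y assume "a \<in> carrier (R Quot J)" "x \<in> carrier (quot_mod R J M)" "y \<in> carrier (quot_mod R J M)"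
  then show "a \<odot>\<^bsub>quot_mod R J M\<^esub> (x \<oplus>\<^bsub>quot_mod R J M\<^esub> y) = a \<odot>\<^bsub>quot_mod R J M\<^esub> x \<oplus>\<^bsub>quot_mod R J M\<^esub> a \<odot>\<^bsub>quot_mod R J M\<^esub> y"
    using qsm Q_carrier qM_simps by (auto simp: smult_r_distr)
next
  fix x assume "x \<in> carrier (quot_mod R J M)"
  then show "\<one>\<^bsub>R Quot J\<^esub> \<odot>\<^bsub>quot_mod R J M\<^esub> x = x" using qsm Q_one qM_simps by simp
qed

lemma J0: "\<zero> \<in> J" unfolding Jdef ann_mod_def by auto

lemma QI_mem: "c \<in> quot_ideal R I J \<longleftrightarrow> (\<exists>t\<in>I. c = J +> t)"
proof
  assume "c \<in> quot_ideal R I J"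
  then obtain i j where ij: "i \<in> I" "j \<in> J" "c = J +> (i \<oplus> j)"
    unfolding quot_ideal_def set_add_def' by auto
  have ic: "i \<in> carrier R" using ij(1) II.Icarr by blast
  have jc: "j \<in> carrier R" using ij(2) J.Icarr by blast
  have "i \<oplus> j = j \<oplus> i" using ic jc R.a_comm by metis
  then have "i \<oplus> j \<in> J +> i" using ij(2) rcos_mem[OF ic] by blast
  then have "J +> i = J +> (i \<oplus> j)" using J.a_repr_independence'[OF _ ic] by blast
  then show "\<exists>t\<in>I. c = J +> t" using ij by auto
next
  assume "\<exists>t\<in>I. c = J +> t"
  then obtain t where t: "t \<in> I" "c = J +> t" by auto
  have tc: "t \<in> carrier R" using t(1) II.Icarr by blast
  have "t \<oplus> \<zero> \<in> I <+> J" unfolding set_add_def' using t(1) J0 by blast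
  moreover have "c = J +> (t \<oplus> \<zero>)" using t tc by simp
  ultimately show "c \<in> quot_ideal R I J" unfolding quot_ideal_def by blast
qed

lemma hQ: "hctx (R Quot J) (quot_mod R J M) (quot_ideal R I J)"
proof -
  interpret Qm: module "R Quot J" "quot_mod R J M" by (rule qM_module)
  show ?thesis
  proof (unfold_locales)
    show "quot_ideal R I J \<subseteq> carrier (R Quot J)" using QI_mem Q_carrier II.Icarr by blast
  next
    fix s t assume "s \<in> quot_ideal R I J" "t \<in> quot_ideal R I J"
    then show "s \<oplus>\<^bsub>R Quot J\<^esub> t \<in> quot_ideal R I J" using QI_mem Q_add II.Icarr II.a_closed by auto
  next
    fix r t assume "r \<in> carrier (R Quot J)" "t \<in> quot_ideal R I J"
    then show "r \<otimes>\<^bsub>R Quot J\<^esub> t \<in> quot_ideal R I J" using QI_mem Q_carrier Q_mult II.Icarr II.I_l_closed by auto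
  qed
qed


lemma hM: "hctx R M I" by (rule hctxI[OF is_cring Iid module_axioms])

sublocale HM: hctx R M I by (rule hM)
sublocale HQ: hctx "R Quot J" "quot_mod R J M" "quot_ideal R I J" by (rule hQ)

lemma wd:
  assumes p: "\<phi> \<in> Zset R I M" and t: "t \<in> I" "t' \<in> I" and e: "J +> t = J +> t'"
  shows "\<phi> t = \<phi> t'"
proof -
  have tc: "t \<in> carrier R" "t' \<in> carrier R" using t II.Icarr by auto
  have "t' \<in> J +> t" using e J.a_rcos_self[OF tc(2)] by simp
  then obtain j where j: "j \<in> J" "t' = j \<oplus> t" using rcos_mem[OF tc(1)] by auto
  have jc: "j \<in> carrier R" using j J.Icarr by auto
  have "j = t' \<oplus> \<ominus> t" using j(2) jc tc by (simp add: R.a_assoc R.r_neg)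
  then have jI: "j \<in> I" using t II.a_closed II.a_inv_closed by simp
  obtain m where m: "m \<in> carrier M" "\<phi> j = j \<odot>\<^bsub>M\<^esub> m" using HM.ZsetD(4)[OF p jI] by blast
  have "\<phi> t' = \<phi> j \<oplus>\<^bsub>M\<^esub> \<phi> t" using j(2) HM.ZsetD(2)[OF p jI t(1)] by simp
  also have "\<dots> = \<phi> t" using m Jann[OF j(1)] HM.Zset_carr[OF p t(1)] by simp
  finally show ?thesis by simp
qed

definition lift where "lift \<phi> = (\<lambda>c\<in>quot_ideal R I J. \<phi> (SOME t. t \<in> I \<and> c = J +> t))"

lemma tsel: assumes "t \<in> I"
  shows "(SOME t'. t' \<in> I \<and> J +> t = J +> t') \<in> I" "J +> t = J +> (SOME t'. t' \<in> I \<and> J +> t = J +> t')"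
proof -
  have "(SOME t'. t' \<in> I \<and> J +> t = J +> t') \<in> I \<and> J +> t = J +> (SOME t'. t' \<in> I \<and> J +> t = J +> t')"
  proof -
    have "t \<in> I \<and> J +> t = J +> t" using assms by simp
    then show ?thesis by (rule someI[where P="\<lambda>t'. t' \<in> I \<and> J +> t = J +> t'"])
  qed
  then show "(SOME t'. t' \<in> I \<and> J +> t = J +> t') \<in> I" "J +> t = J +> (SOME t'. t' \<in> I \<and> J +> t = J +> t')" by auto
qed

lemma lift_at: assumes p: "\<phi> \<in> Zset R I M" and t: "t \<in> I" shows "lift \<phi> (J +> t) = \<phi> t"
proof -
  have "J +> t \<in> quot_ideal R I J" using QI_mem t by auto
  then show ?thesis unfolding lift_def using wd[OF p tsel(1)[OF t] t] tsel(2)[OF t] by simp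
qed

lemma QI_cases: assumes "c \<in> quot_ideal R I J" obtains t where "t \<in> I" "c = J +> t"
  using assms QI_mem by auto

lemma lift_Z: assumes p: "\<phi> \<in> Zset R I M" shows "lift \<phi> \<in> Zset (R Quot J) (quot_ideal R I J) (quot_mod R J M)"
proof (rule HQ.ZsetI)
  show "lift \<phi> \<in> quot_ideal R I J \<rightarrow>\<^sub>E carrier (quot_mod R J M)"
  proof
    fix c assume "c \<in> quot_ideal R I J"
    then obtain t where "t \<in> I" "c = J +> t" by (rule QI_cases)
    then show "lift \<phi> c \<in> carrier (quot_mod R J M)" using lift_at[OF p] HM.Zset_carr[OF p] qM_simps by simp
  next
    fix c assume "c \<notin> quot_ideal R I J" then show "lift \<phi> c = undefined" unfolding lift_def by simp
  qed
next
  fix c d assume "c \<in> quot_ideal R I J" "d \<in> quot_ideal R I J"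
  then obtain s t where st: "s \<in> I" "c = J +> s" "t \<in> I" "d = J +> t" by (metis QI_cases)
  then show "lift \<phi> (c \<oplus>\<^bsub>R Quot J\<^esub> d) = lift \<phi> c \<oplus>\<^bsub>quot_mod R J M\<^esub> lift \<phi> d"
    using Q_add II.Icarr lift_at[OF p] II.a_closed HM.ZsetD(2)[OF p] qM_simps by simp
next
  fix r c assume "r \<in> carrier (R Quot J)" "c \<in> quot_ideal R I J"
  then obtain a t where at: "a \<in> carrier R" "r = J +> a" "t \<in> I" "c = J +> t" by (metis QI_cases Q_carrier)
  then show "lift \<phi> (r \<otimes>\<^bsub>R Quot J\<^esub> c) = r \<odot>\<^bsub>quot_mod R J M\<^esub> lift \<phi> c"
    using Q_mult II.Icarr lift_at[OF p] II.I_l_closed HM.ZsetD(3)[OF p] qsm HM.Zset_carr[OF p] by simp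
next
  fix c assume "c \<in> quot_ideal R I J"
  then obtain t where t: "t \<in> I" "c = J +> t" by (rule QI_cases)
  obtain m where m: "m \<in> carrier M" "\<phi> t = t \<odot>\<^bsub>M\<^esub> m" using HM.ZsetD(4)[OF p t(1)] by blast
  show "\<exists>m\<in>carrier (quot_mod R J M). lift \<phi> c = c \<odot>\<^bsub>quot_mod R J M\<^esub> m"
    using t m lift_at[OF p] qsm II.Icarr qM_simps by (auto intro!: bexI[of _ m])
qed

lemma cq: assumes p: "\<phi> \<in> Zset R I M"
  shows "can_quot R I J M (Hclass R I M \<phi>) = Hclass (R Quot J) (quot_ideal R I J) (quot_mod R J M) (lift \<phi>)"
proof -
  define \<psi> where "\<psi> = (SOME x. x \<in> Hclass R I M \<phi>)"
  have q: "\<psi> \<in> Zset R I M" "hrel I M \<phi> \<psi>" using HM.some_rep[OF p] unfolding \<psi>_def by auto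
  then obtain m where m: "m \<in> carrier M" "\<forall>t\<in>I. \<psi> t = \<phi> t \<oplus>\<^bsub>M\<^esub> t \<odot>\<^bsub>M\<^esub> m" unfolding hrel_def by auto
  have "hrel (quot_ideal R I J) (quot_mod R J M) (lift \<phi>) (lift \<psi>)" unfolding hrel_def
  proof (intro bexI ballI)
    show "m \<in> carrier (quot_mod R J M)" using m qM_simps by simp
    fix c assume "c \<in> quot_ideal R I J"
    then obtain t where t: "t \<in> I" "c = J +> t" by (rule QI_cases)
    then show "lift \<psi> c = lift \<phi> c \<oplus>\<^bsub>quot_mod R J M\<^esub> c \<odot>\<^bsub>quot_mod R J M\<^esub> m"
      using lift_at[OF p] lift_at[OF q(1)] m qsm II.Icarr qM_simps by simp
  qed
  then have "Hclass (R Quot J) (quot_ideal R I J) (quot_mod R J M) (lift \<phi>) = Hclass (R Quot J) (quot_ideal R I J) (quot_mod R J M) (lift \<psi>)"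
    using HQ.Hclass_eq[OF lift_Z[OF p] lift_Z[OF q(1)]] by simp
  then show ?thesis unfolding can_quot_def Let_def \<psi>_def[symmetric] lift_def[symmetric] by simp
qed

lemma part3_main:
  shows "bij_betw (can_quot R I J M) (carrier (Hmod R I M))
           (carrier (Hmod (R Quot J) (quot_ideal R I J) (quot_mod R J M)))
       \<and> (\<forall>Xa\<in>carrier (Hmod R I M). \<forall>Ya\<in>carrier (Hmod R I M).
            can_quot R I J M (Xa \<oplus>\<^bsub>Hmod R I M\<^esub> Ya)
            = can_quot R I J M Xa \<oplus>\<^bsub>Hmod (R Quot J) (quot_ideal R I J) (quot_mod R J M)\<^esub> can_quot R I J M Ya)
       \<and> (\<forall>r\<in>carrier R. \<forall>Xa\<in>carrier (Hmod R I M).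
            can_quot R I J M (r \<odot>\<^bsub>Hmod R I M\<^esub> Xa)
            = (J +>\<^bsub>R\<^esub> r) \<odot>\<^bsub>Hmod (R Quot J) (quot_ideal R I J) (quot_mod R J M)\<^esub> can_quot R I J M Xa)"
proof (intro conjI ballI)
  fix Xa Ya assume XY: "Xa \<in> carrier (Hmod R I M)" "Ya \<in> carrier (Hmod R I M)"
  obtain \<phi> where p: "\<phi> \<in> Zset R I M" "Xa = Hclass R I M \<phi>" using XY HM.Hmod_carrier by auto
  obtain \<psi> where q: "\<psi> \<in> Zset R I M" "Ya = Hclass R I M \<psi>" using XY HM.Hmod_carrier by auto
  have "lift (hadd I M \<phi> \<psi>) = hadd (quot_ideal R I J) (quot_mod R J M) (lift \<phi>) (lift \<psi>)"
  proof
    fix c show "lift (hadd I M \<phi> \<psi>) c = hadd (quot_ideal R I J) (quot_mod R J M) (lift \<phi>) (lift \<psi>) c"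
    proof (cases "c \<in> quot_ideal R I J")
      case True
      then obtain t where t: "t \<in> I" "c = J +> t" by (rule QI_cases)
      then show ?thesis using lift_at p q HM.hadd_Z[OF p(1) q(1)] True qM_simps by (simp add: hadd_def)
    qed (simp add: lift_def hadd_def)
  qed
  then show "can_quot R I J M (Xa \<oplus>\<^bsub>Hmod R I M\<^esub> Ya)
            = can_quot R I J M Xa \<oplus>\<^bsub>Hmod (R Quot J) (quot_ideal R I J) (quot_mod R J M)\<^esub> can_quot R I J M Ya"
    unfolding p(2) q(2) HM.Hmod_add[OF p(1) q(1)] cq[OF HM.hadd_Z[OF p(1) q(1)]] cq[OF p(1)] cq[OF q(1)]
      HQ.Hmod_add[OF lift_Z[OF p(1)] lift_Z[OF q(1)]] by simp
next
  fix r Xa assume r: "r \<in> carrier R" and X: "Xa \<in> carrier (Hmod R I M)"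
  obtain \<phi> where p: "\<phi> \<in> Zset R I M" "Xa = Hclass R I M \<phi>" using X HM.Hmod_carrier by auto
  have rQ: "J +> r \<in> carrier (R Quot J)" using Q_carrier r by auto
  have "lift (hsmult I M r \<phi>) = hsmult (quot_ideal R I J) (quot_mod R J M) (J +> r) (lift \<phi>)"
  proof
    fix c show "lift (hsmult I M r \<phi>) c = hsmult (quot_ideal R I J) (quot_mod R J M) (J +> r) (lift \<phi>) c"
    proof (cases "c \<in> quot_ideal R I J")
      case True
      then obtain t where t: "t \<in> I" "c = J +> t" by (rule QI_cases)
      then show ?thesis using lift_at p HM.hsmult_Z[OF r p(1)] True qsm[OF r] HM.Zset_carr[OF p(1)] by (simp add: hsmult_def)
    qed (simp add: lift_def hsmult_def)
  qed
  then show "can_quot R I J M (r \<odot>\<^bsub>Hmod R I M\<^esub> Xa)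
            = (J +>\<^bsub>R\<^esub> r) \<odot>\<^bsub>Hmod (R Quot J) (quot_ideal R I J) (quot_mod R J M)\<^esub> can_quot R I J M Xa"
    unfolding p(2) HM.Hmod_smult[OF r p(1)] cq[OF HM.hsmult_Z[OF r p(1)]] cq[OF p(1)]
      HQ.Hmod_smult[OF rQ lift_Z[OF p(1)]] by simp
next
  show "bij_betw (can_quot R I J M) (carrier (Hmod R I M))
           (carrier (Hmod (R Quot J) (quot_ideal R I J) (quot_mod R J M)))"
    unfolding bij_betw_def
  proof (intro conjI equalityI subsetI)
    show "inj_on (can_quot R I J M) (carrier (Hmod R I M))"
    proof (rule inj_onI)
    fix Xa Ya assume X: "Xa \<in> carrier (Hmod R I M)" and Y: "Ya \<in> carrier (Hmod R I M)"
      and eq: "can_quot R I J M Xa = can_quot R I J M Ya"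
    obtain \<phi> where p: "\<phi> \<in> Zset R I M" "Xa = Hclass R I M \<phi>" using X HM.Hmod_carrier by auto
    obtain \<psi> where q: "\<psi> \<in> Zset R I M" "Ya = Hclass R I M \<psi>" using Y HM.Hmod_carrier by auto
    have "Hclass (R Quot J) (quot_ideal R I J) (quot_mod R J M) (lift \<phi>) = Hclass (R Quot J) (quot_ideal R I J) (quot_mod R J M) (lift \<psi>)"
      using eq unfolding p(2) q(2) cq[OF p(1)] cq[OF q(1)] .
    then have "hrel (quot_ideal R I J) (quot_mod R J M) (lift \<phi>) (lift \<psi>)"
      using HQ.Hclass_eq[OF lift_Z[OF p(1)] lift_Z[OF q(1)]] by simp
    then obtain m where m: "m \<in> carrier M" "\<forall>c\<in>quot_ideal R I J. lift \<psi> c = lift \<phi> c \<oplus>\<^bsub>M\<^esub> c \<odot>\<^bsub>quot_mod R J M\<^esub> m"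
      unfolding hrel_def qM_simps by auto
    have "hrel I M \<phi> \<psi>" unfolding hrel_def
    proof (intro bexI ballI)
      fix t assume t: "t \<in> I"
      then have "J +> t \<in> quot_ideal R I J" using QI_mem by auto
      then show "\<psi> t = \<phi> t \<oplus>\<^bsub>M\<^esub> t \<odot>\<^bsub>M\<^esub> m" using m lift_at[OF p(1) t] lift_at[OF q(1) t] qsm II.Icarr t by simp
    qed (rule m(1))
    then show "Xa = Ya" unfolding p(2) q(2) using HM.Hclass_eq[OF p(1) q(1)] by simp
    qed
  next
    fix Y assume "Y \<in> can_quot R I J M ` carrier (Hmod R I M)"
    then obtain Xa where X: "Xa \<in> carrier (Hmod R I M)" "Y = can_quot R I J M Xa" by auto
    obtain \<phi> where p: "\<phi> \<in> Zset R I M" "Xa = Hclass R I M \<phi>" using X HM.Hmod_carrier by auto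
    show "Y \<in> carrier (Hmod (R Quot J) (quot_ideal R I J) (quot_mod R J M))"
      unfolding X(2) p(2) cq[OF p(1)] using HQ.Hmod_carrier lift_Z[OF p(1)] by auto
  next
    fix Y assume "Y \<in> carrier (Hmod (R Quot J) (quot_ideal R I J) (quot_mod R J M))"
    then obtain \<psi> where q: "\<psi> \<in> Zset (R Quot J) (quot_ideal R I J) (quot_mod R J M)"
      "Y = Hclass (R Quot J) (quot_ideal R I J) (quot_mod R J M) \<psi>" using HQ.Hmod_carrier by auto
    define \<phi> where "\<phi> = (\<lambda>t\<in>I. \<psi> (J +> t))"
    have QIt: "\<And>t. t \<in> I \<Longrightarrow> J +> t \<in> quot_ideal R I J" using QI_mem by auto
    have rQ: "\<And>r. r \<in> carrier R \<Longrightarrow> J +> r \<in> carrier (R Quot J)" using Q_carrier by auto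
    have p: "\<phi> \<in> Zset R I M"
    proof (rule HM.ZsetI)
      show "\<phi> \<in> I \<rightarrow>\<^sub>E carrier M" unfolding \<phi>_def using HQ.Zset_carr[OF q(1) QIt] qM_simps by auto
    next
      fix s t assume st: "s \<in> I" "t \<in> I"
      have "\<phi> (s \<oplus> t) = \<psi> (J +> (s \<oplus> t))" unfolding \<phi>_def using st II.a_closed by simp
      also have "\<dots> = \<psi> ((J +> s) \<oplus>\<^bsub>R Quot J\<^esub> (J +> t))" using Q_add st II.Icarr by simp
      also have "\<dots> = \<psi> (J +> s) \<oplus>\<^bsub>M\<^esub> \<psi> (J +> t)" using HQ.ZsetD(2)[OF q(1) QIt QIt] st qM_simps by simp
      finally show "\<phi> (s \<oplus> t) = \<phi> s \<oplus>\<^bsub>M\<^esub> \<phi> t" unfolding \<phi>_def using st by simp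
    next
      fix r t assume rt: "r \<in> carrier R" "t \<in> I"
      have "\<phi> (r \<otimes> t) = \<psi> (J +> (r \<otimes> t))" unfolding \<phi>_def using rt II.I_l_closed by simp
      also have "\<dots> = \<psi> ((J +> r) \<otimes>\<^bsub>R Quot J\<^esub> (J +> t))" using Q_mult rt II.Icarr by simp
      also have "\<dots> = (J +> r) \<odot>\<^bsub>quot_mod R J M\<^esub> \<psi> (J +> t)" using HQ.ZsetD(3)[OF q(1) rQ QIt] rt by simp
      also have "\<dots> = r \<odot>\<^bsub>M\<^esub> \<psi> (J +> t)" using qsm rt HQ.Zset_carr[OF q(1) QIt] qM_simps by simp
      finally show "\<phi> (r \<otimes> t) = r \<odot>\<^bsub>M\<^esub> \<phi> t" unfolding \<phi>_def using rt by simp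
    next
      fix t assume t: "t \<in> I"
      obtain m where "m \<in> carrier (quot_mod R J M)" "\<psi> (J +> t) = (J +> t) \<odot>\<^bsub>quot_mod R J M\<^esub> m"
        using HQ.ZsetD(4)[OF q(1) QIt[OF t]] by blast
      then show "\<exists>m\<in>carrier M. \<phi> t = t \<odot>\<^bsub>M\<^esub> m" unfolding \<phi>_def using t qsm II.Icarr qM_simps by auto
    qed
    have "lift \<phi> = \<psi>"
    proof
      fix c show "lift \<phi> c = \<psi> c"
      proof (cases "c \<in> quot_ideal R I J")
        case True
        then obtain t where t: "t \<in> I" "c = J +> t" by (rule QI_cases)
        then show ?thesis using lift_at[OF p t(1)] unfolding \<phi>_def by simp
      next
        case False then show ?thesis using HQ.Zset_ext[OF q(1)] unfolding lift_def by simp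
      qed
    qed
    then have "Y = can_quot R I J M (Hclass R I M \<phi>)" using cq[OF p] q(2) by simp
    moreover have "Hclass R I M \<phi> \<in> carrier (Hmod R I M)" using p HM.Hmod_carrier by auto
    ultimately show "Y \<in> can_quot R I J M ` carrier (Hmod R I M)" by blast
  qed
qed

end

lemma ring_mod_simps:
  "carrier (ring_mod R) = carrier R" "x \<oplus>\<^bsub>ring_mod R\<^esub> y = x \<oplus>\<^bsub>R\<^esub> y" "\<zero>\<^bsub>ring_mod R\<^esub> = \<zero>\<^bsub>R\<^esub>"
  "a \<odot>\<^bsub>ring_mod R\<^esub> x = a \<otimes>\<^bsub>R\<^esub> x"
  unfolding ring_mod_def by simp_all

lemma ring_mod_module: assumes "cring R" shows "module R (ring_mod R)"
proof -
  interpret cring R by fact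
  show ?thesis
  proof (rule moduleI[OF assms])
    show "abelian_group (ring_mod R)"
    proof (rule abelian_groupI, simp_all only: ring_mod_simps)
      fix x assume "x \<in> carrier R"
      then show "\<exists>y\<in>carrier R. y \<oplus>\<^bsub>R\<^esub> x = \<zero>\<^bsub>R\<^esub>" using l_neg a_inv_closed by blast
    qed (simp_all add: a_ac)
  qed (simp_all add: ring_mod_simps l_distr r_distr m_assoc)
qed

locale lmod = module +
  fixes S assumes ms: "mult_set R S"
begin

lemma S_sub: "s \<in> S \<Longrightarrow> s \<in> carrier R" using ms unfolding mult_set_def by auto
lemma S_one: "\<one> \<in> S" using ms unfolding mult_set_def by auto
lemma S_mult: "s \<in> S \<Longrightarrow> u \<in> S \<Longrightarrow> s \<otimes> u \<in> S" using ms unfolding mult_set_def by auto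

lemma minus_zero_iff: "x \<in> carrier M \<Longrightarrow> y \<in> carrier M \<Longrightarrow> x \<ominus>\<^bsub>M\<^esub> y = \<zero>\<^bsub>M\<^esub> \<longleftrightarrow> x = y"
  by (metis M.minus_equality M.minus_minus M.r_neg a_minus_def M.a_inv_closed)

lemma smult_minus: "u \<in> carrier R \<Longrightarrow> x \<in> carrier M \<Longrightarrow> y \<in> carrier M \<Longrightarrow>
  u \<odot>\<^bsub>M\<^esub> (x \<ominus>\<^bsub>M\<^esub> y) = u \<odot>\<^bsub>M\<^esub> x \<ominus>\<^bsub>M\<^esub> u \<odot>\<^bsub>M\<^esub> y"
  by (simp add: a_minus_def smult_r_distr smult_r_minus)

definition lrel where "lrel m s m' s' \<longleftrightarrow> (\<exists>u\<in>S. (u \<otimes> s') \<odot>\<^bsub>M\<^esub> m = (u \<otimes> s) \<odot>\<^bsub>M\<^esub> m')"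

lemma lc_mem: assumes "m \<in> carrier M" "s \<in> S"
  shows "p \<in> loc_cls R S M m s \<longleftrightarrow> fst p \<in> carrier M \<and> snd p \<in> S \<and> lrel m s (fst p) (snd p)"
proof -
  have "u \<odot>\<^bsub>M\<^esub> (s' \<odot>\<^bsub>M\<^esub> m \<ominus>\<^bsub>M\<^esub> s \<odot>\<^bsub>M\<^esub> m') = \<zero>\<^bsub>M\<^esub> \<longleftrightarrow> (u \<otimes> s') \<odot>\<^bsub>M\<^esub> m = (u \<otimes> s) \<odot>\<^bsub>M\<^esub> m'"
    if "u \<in> S" "s' \<in> S" "m' \<in> carrier M" for u s' m'
    using that assms S_sub by (simp add: smult_minus minus_zero_iff smult_assoc1)
  then show ?thesis unfolding loc_cls_def lrel_def by (cases p) auto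
qed

lemma lrel_refl: "m \<in> carrier M \<Longrightarrow> s \<in> S \<Longrightarrow> lrel m s m s"
  unfolding lrel_def using S_one by blast

lemma lrel_sym: "lrel m s m' s' \<Longrightarrow> lrel m' s' m s"
  unfolding lrel_def by metis

lemma lrel_trans:
  assumes c: "m \<in> carrier M" "m' \<in> carrier M" "m'' \<in> carrier M" "s \<in> S" "s' \<in> S" "s'' \<in> S"
    and r1: "lrel m s m' s'" and r2: "lrel m' s' m'' s''"
  shows "lrel m s m'' s''"
proof -
  obtain u where u: "u \<in> S" "(u \<otimes> s') \<odot>\<^bsub>M\<^esub> m = (u \<otimes> s) \<odot>\<^bsub>M\<^esub> m'" using r1 unfolding lrel_def by auto
  obtain v where v: "v \<in> S" "(v \<otimes> s'') \<odot>\<^bsub>M\<^esub> m' = (v \<otimes> s') \<odot>\<^bsub>M\<^esub> m''" using r2 unfolding lrel_def by auto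
  note C = c(4,5,6)[THEN S_sub] u(1)[THEN S_sub] v(1)[THEN S_sub]
  have "((u \<otimes> v \<otimes> s') \<otimes> s'') \<odot>\<^bsub>M\<^esub> m = (v \<otimes> s'') \<odot>\<^bsub>M\<^esub> ((u \<otimes> s') \<odot>\<^bsub>M\<^esub> m)"
  proof -
    have "(u \<otimes> v \<otimes> s') \<otimes> s'' = (v \<otimes> s'') \<otimes> (u \<otimes> s')" using C by algebra
    then show ?thesis using C c by (simp add: smult_assoc1)
  qed
  also have "\<dots> = (v \<otimes> s'') \<odot>\<^bsub>M\<^esub> ((u \<otimes> s) \<odot>\<^bsub>M\<^esub> m')" using u by simp
  also have "\<dots> = (u \<otimes> s) \<odot>\<^bsub>M\<^esub> ((v \<otimes> s'') \<odot>\<^bsub>M\<^esub> m')" using C c by (simp add: smult_assoc1[symmetric] m_comm)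
  also have "\<dots> = (u \<otimes> s) \<odot>\<^bsub>M\<^esub> ((v \<otimes> s') \<odot>\<^bsub>M\<^esub> m'')" using v by simp
  also have "\<dots> = ((u \<otimes> v \<otimes> s') \<otimes> s) \<odot>\<^bsub>M\<^esub> m''"
  proof -
    have "(u \<otimes> v \<otimes> s') \<otimes> s = (u \<otimes> s) \<otimes> (v \<otimes> s')" using C by algebra
    then show ?thesis using C c by (simp add: smult_assoc1)
  qed
  finally show ?thesis unfolding lrel_def using u(1) v(1) c S_mult by blast
qed

lemma lc_self: "m \<in> carrier M \<Longrightarrow> s \<in> S \<Longrightarrow> (m, s) \<in> loc_cls R S M m s"
  using lc_mem lrel_refl by auto

lemma lc_eq: assumes "m \<in> carrier M" "s \<in> S" "m' \<in> carrier M" "s' \<in> S"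
  shows "loc_cls R S M m s = loc_cls R S M m' s' \<longleftrightarrow> lrel m s m' s'"
proof
  assume "loc_cls R S M m s = loc_cls R S M m' s'"
  then have "(m', s') \<in> loc_cls R S M m s" using lc_self assms by auto
  then show "lrel m s m' s'" using lc_mem assms by auto
next
  assume r: "lrel m s m' s'"
  show "loc_cls R S M m s = loc_cls R S M m' s'"
  proof (rule Set.set_eqI)
    fix p show "p \<in> loc_cls R S M m s \<longleftrightarrow> p \<in> loc_cls R S M m' s'"
      unfolding lc_mem[OF assms(1,2)] lc_mem[OF assms(3,4)]
      using r lrel_sym lrel_trans assms by meson
  qed
qed

lemma lc_eqI: assumes "m \<in> carrier M" "s \<in> S" "m' \<in> carrier M" "s' \<in> S"
  and "s' \<odot>\<^bsub>M\<^esub> m = s \<odot>\<^bsub>M\<^esub> m'"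
  shows "loc_cls R S M m s = loc_cls R S M m' s'"
  using assms lc_eq unfolding lrel_def using S_one S_sub by (metis l_one)

lemma lc_some: assumes "m \<in> carrier M" "s \<in> S"
  defines "p \<equiv> SOME p. p \<in> loc_cls R S M m s"
  shows "fst p \<in> carrier M" "snd p \<in> S" "loc_cls R S M (fst p) (snd p) = loc_cls R S M m s"
proof -
  have "p \<in> loc_cls R S M m s" unfolding p_def using lc_self[OF assms(1,2)] by (rule someI)
  then show "fst p \<in> carrier M" "snd p \<in> S" "loc_cls R S M (fst p) (snd p) = loc_cls R S M m s"
    using lc_mem[OF assms(1,2)] lc_eq[OF _ _ assms(1,2)] lrel_sym by auto
qed

lemma lm_carrier: "Xa \<in> carrier (loc_mod R S M) \<longleftrightarrow> (\<exists>m\<in>carrier M. \<exists>s\<in>S. Xa = loc_cls R S M m s)"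
  unfolding loc_mod_def by auto

lemma lm_zero: "\<zero>\<^bsub>loc_mod R S M\<^esub> = loc_cls R S M \<zero>\<^bsub>M\<^esub> \<one>"
  unfolding loc_mod_def by simp

lemma lm_add: assumes "m \<in> carrier M" "s \<in> S" "n \<in> carrier M" "u \<in> S"
  shows "loc_cls R S M m s \<oplus>\<^bsub>loc_mod R S M\<^esub> loc_cls R S M n u
       = loc_cls R S M ((u \<odot>\<^bsub>M\<^esub> m) \<oplus>\<^bsub>M\<^esub> (s \<odot>\<^bsub>M\<^esub> n)) (s \<otimes> u)"
proof -
  define p where "p = (SOME p. p \<in> loc_cls R S M m s)"
  define q where "q = (SOME p. p \<in> loc_cls R S M n u)"
  obtain m1 s1 where p: "p = (m1, s1)" by (cases p)
  obtain n1 u1 where q: "q = (n1, u1)" by (cases q)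
  have P: "m1 \<in> carrier M" "s1 \<in> S" "lrel m s m1 s1"
    using lc_some[OF assms(1,2)] p lc_eq[OF assms(1,2)] unfolding p_def[symmetric] by auto
  have Q: "n1 \<in> carrier M" "u1 \<in> S" "lrel n u n1 u1"
    using lc_some[OF assms(3,4)] q lc_eq[OF assms(3,4)] unfolding q_def[symmetric] by auto
  obtain w1 where w1: "w1 \<in> S" "(w1 \<otimes> s1) \<odot>\<^bsub>M\<^esub> m = (w1 \<otimes> s) \<odot>\<^bsub>M\<^esub> m1" using P unfolding lrel_def by auto
  obtain w2 where w2: "w2 \<in> S" "(w2 \<otimes> u1) \<odot>\<^bsub>M\<^esub> n = (w2 \<otimes> u) \<odot>\<^bsub>M\<^esub> n1" using Q unfolding lrel_def by auto
  note C = assms(2,4)[THEN S_sub] P(2)[THEN S_sub] Q(2)[THEN S_sub] w1(1)[THEN S_sub] w2(1)[THEN S_sub]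
  note Mc = assms(1,3) P(1) Q(1)
  have lhs: "((w1 \<otimes> w2) \<otimes> (s1 \<otimes> u1)) \<odot>\<^bsub>M\<^esub> ((u \<odot>\<^bsub>M\<^esub> m) \<oplus>\<^bsub>M\<^esub> (s \<odot>\<^bsub>M\<^esub> n))
      = (w2 \<otimes> u1 \<otimes> u) \<odot>\<^bsub>M\<^esub> ((w1 \<otimes> s1) \<odot>\<^bsub>M\<^esub> m) \<oplus>\<^bsub>M\<^esub> (w1 \<otimes> s1 \<otimes> s) \<odot>\<^bsub>M\<^esub> ((w2 \<otimes> u1) \<odot>\<^bsub>M\<^esub> n)"
  proof -
    have "((w1 \<otimes> w2) \<otimes> (s1 \<otimes> u1)) \<otimes> u = (w2 \<otimes> u1 \<otimes> u) \<otimes> (w1 \<otimes> s1)"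
      "((w1 \<otimes> w2) \<otimes> (s1 \<otimes> u1)) \<otimes> s = (w1 \<otimes> s1 \<otimes> s) \<otimes> (w2 \<otimes> u1)" using C by algebra+
    then show ?thesis using C Mc by (simp add: smult_r_distr smult_assoc1[symmetric])
  qed
  have rhs: "((w1 \<otimes> w2) \<otimes> (s \<otimes> u)) \<odot>\<^bsub>M\<^esub> ((u1 \<odot>\<^bsub>M\<^esub> m1) \<oplus>\<^bsub>M\<^esub> (s1 \<odot>\<^bsub>M\<^esub> n1))
      = (w2 \<otimes> u1 \<otimes> u) \<odot>\<^bsub>M\<^esub> ((w1 \<otimes> s) \<odot>\<^bsub>M\<^esub> m1) \<oplus>\<^bsub>M\<^esub> (w1 \<otimes> s1 \<otimes> s) \<odot>\<^bsub>M\<^esub> ((w2 \<otimes> u) \<odot>\<^bsub>M\<^esub> n1)"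
  proof -
    have "((w1 \<otimes> w2) \<otimes> (s \<otimes> u)) \<otimes> u1 = (w2 \<otimes> u1 \<otimes> u) \<otimes> (w1 \<otimes> s)"
      "((w1 \<otimes> w2) \<otimes> (s \<otimes> u)) \<otimes> s1 = (w1 \<otimes> s1 \<otimes> s) \<otimes> (w2 \<otimes> u)" using C by algebra+
    then show ?thesis using C Mc by (simp add: smult_r_distr smult_assoc1[symmetric])
  qed
  have "lrel ((u \<odot>\<^bsub>M\<^esub> m) \<oplus>\<^bsub>M\<^esub> (s \<odot>\<^bsub>M\<^esub> n)) (s \<otimes> u) ((u1 \<odot>\<^bsub>M\<^esub> m1) \<oplus>\<^bsub>M\<^esub> (s1 \<odot>\<^bsub>M\<^esub> n1)) (s1 \<otimes> u1)"
    unfolding lrel_def using lhs rhs w1 w2 S_mult by (auto intro!: bexI[of _ "w1 \<otimes> w2"])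
  then have "loc_cls R S M ((u1 \<odot>\<^bsub>M\<^esub> m1) \<oplus>\<^bsub>M\<^esub> (s1 \<odot>\<^bsub>M\<^esub> n1)) (s1 \<otimes> u1) = loc_cls R S M ((u \<odot>\<^bsub>M\<^esub> m) \<oplus>\<^bsub>M\<^esub> (s \<odot>\<^bsub>M\<^esub> n)) (s \<otimes> u)"
    using lc_eq C Mc P Q assms S_mult lrel_sym by (metis M.a_closed smult_closed S_sub)
  then show ?thesis unfolding loc_mod_def using p q p_def q_def by simp
qed


lemma lm_smult_aux: "loc_cls R S (ring_mod R) a s \<odot>\<^bsub>loc_mod R S M\<^esub> loc_cls R S M m u
   = (case (SOME p. p \<in> loc_cls R S (ring_mod R) a s, SOME q. q \<in> loc_cls R S M m u) of ((a, s), (m, u)) \<Rightarrow>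
               loc_cls R S M (a \<odot>\<^bsub>M\<^esub> m) (s \<otimes> u))"
  unfolding loc_mod_def by simp

end

lemma lmod_ring: "cring R \<Longrightarrow> mult_set R S \<Longrightarrow> lmod R (ring_mod R) S"
  using ring_mod_module unfolding lmod_def lmod_axioms_def by blast

lemma lm_smult:
  assumes LM: "lmod R M S" and a: "a \<in> carrier R" and s: "s \<in> S" and m: "m \<in> carrier M" and u: "u \<in> S"
  shows "loc_cls R S (ring_mod R) a s \<odot>\<^bsub>loc_mod R S M\<^esub> loc_cls R S M m u = loc_cls R S M (a \<odot>\<^bsub>M\<^esub> m) (s \<otimes>\<^bsub>R\<^esub> u)"
proof -
  interpret LM: lmod R M S by fact
  interpret LR: lmod R "ring_mod R" S using lmod_ring LM.is_cring LM.ms by blast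
  define p where "p = (SOME p. p \<in> loc_cls R S (ring_mod R) a s)"
  define q where "q = (SOME p. p \<in> loc_cls R S M m u)"
  obtain a1 s1 where p: "p = (a1, s1)" by (cases p)
  obtain m1 u1 where q: "q = (m1, u1)" by (cases q)
  have a': "a \<in> carrier (ring_mod R)" using a unfolding ring_mod_def by simp
  have P: "a1 \<in> carrier R" "s1 \<in> S" "LR.lrel a s a1 s1"
    using LR.lc_some[OF a' s] p LR.lc_eq[OF a' s] unfolding p_def[symmetric] ring_mod_simps by auto
  have Q: "m1 \<in> carrier M" "u1 \<in> S" "LM.lrel m u m1 u1"
    using LM.lc_some[OF m u] q LM.lc_eq[OF m u] unfolding q_def[symmetric] by auto
  obtain w1 where w1: "w1 \<in> S" "(w1 \<otimes>\<^bsub>R\<^esub> s1) \<otimes>\<^bsub>R\<^esub> a = (w1 \<otimes>\<^bsub>R\<^esub> s) \<otimes>\<^bsub>R\<^esub> a1"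
    using P unfolding LR.lrel_def ring_mod_simps by auto
  obtain w2 where w2: "w2 \<in> S" "(w2 \<otimes>\<^bsub>R\<^esub> u1) \<odot>\<^bsub>M\<^esub> m = (w2 \<otimes>\<^bsub>R\<^esub> u) \<odot>\<^bsub>M\<^esub> m1" using Q unfolding LM.lrel_def by auto
  note C = s[THEN LM.S_sub] u[THEN LM.S_sub] P(2)[THEN LM.S_sub] Q(2)[THEN LM.S_sub]
    w1(1)[THEN LM.S_sub] w2(1)[THEN LM.S_sub] a P(1)
  have "((w1 \<otimes>\<^bsub>R\<^esub> w2) \<otimes>\<^bsub>R\<^esub> (s1 \<otimes>\<^bsub>R\<^esub> u1)) \<odot>\<^bsub>M\<^esub> (a \<odot>\<^bsub>M\<^esub> m)
        = (((w1 \<otimes>\<^bsub>R\<^esub> s1) \<otimes>\<^bsub>R\<^esub> a) \<otimes>\<^bsub>R\<^esub> (w2 \<otimes>\<^bsub>R\<^esub> u1)) \<odot>\<^bsub>M\<^esub> m"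
  proof -
    have "((w1 \<otimes>\<^bsub>R\<^esub> w2) \<otimes>\<^bsub>R\<^esub> (s1 \<otimes>\<^bsub>R\<^esub> u1)) \<otimes>\<^bsub>R\<^esub> a = ((w1 \<otimes>\<^bsub>R\<^esub> s1) \<otimes>\<^bsub>R\<^esub> a) \<otimes>\<^bsub>R\<^esub> (w2 \<otimes>\<^bsub>R\<^esub> u1)"
      using C by (simp add: LM.R.m_ac)
    then show ?thesis using C m by (simp add: LM.smult_assoc1[symmetric])
  qed
  also have "\<dots> = (((w1 \<otimes>\<^bsub>R\<^esub> s) \<otimes>\<^bsub>R\<^esub> a1) \<otimes>\<^bsub>R\<^esub> (w2 \<otimes>\<^bsub>R\<^esub> u1)) \<odot>\<^bsub>M\<^esub> m" using w1 by simp
  also have "\<dots> = ((w1 \<otimes>\<^bsub>R\<^esub> s) \<otimes>\<^bsub>R\<^esub> a1) \<odot>\<^bsub>M\<^esub> ((w2 \<otimes>\<^bsub>R\<^esub> u1) \<odot>\<^bsub>M\<^esub> m)" using C m by (simp add: LM.smult_assoc1)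
  also have "\<dots> = ((w1 \<otimes>\<^bsub>R\<^esub> s) \<otimes>\<^bsub>R\<^esub> a1) \<odot>\<^bsub>M\<^esub> ((w2 \<otimes>\<^bsub>R\<^esub> u) \<odot>\<^bsub>M\<^esub> m1)" using w2 by simp
  also have "\<dots> = ((w1 \<otimes>\<^bsub>R\<^esub> w2) \<otimes>\<^bsub>R\<^esub> (s \<otimes>\<^bsub>R\<^esub> u)) \<odot>\<^bsub>M\<^esub> (a1 \<odot>\<^bsub>M\<^esub> m1)"
  proof -
    have "((w1 \<otimes>\<^bsub>R\<^esub> s) \<otimes>\<^bsub>R\<^esub> a1) \<otimes>\<^bsub>R\<^esub> (w2 \<otimes>\<^bsub>R\<^esub> u) = ((w1 \<otimes>\<^bsub>R\<^esub> w2) \<otimes>\<^bsub>R\<^esub> (s \<otimes>\<^bsub>R\<^esub> u)) \<otimes>\<^bsub>R\<^esub> a1"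
      using C by (simp add: LM.R.m_ac)
    then show ?thesis using C Q(1) by (simp add: LM.smult_assoc1[symmetric])
  qed
  finally have "LM.lrel (a \<odot>\<^bsub>M\<^esub> m) (s \<otimes>\<^bsub>R\<^esub> u) (a1 \<odot>\<^bsub>M\<^esub> m1) (s1 \<otimes>\<^bsub>R\<^esub> u1)"
    unfolding LM.lrel_def using w1 w2 LM.S_mult by blast
  then have "loc_cls R S M (a1 \<odot>\<^bsub>M\<^esub> m1) (s1 \<otimes>\<^bsub>R\<^esub> u1) = loc_cls R S M (a \<odot>\<^bsub>M\<^esub> m) (s \<otimes>\<^bsub>R\<^esub> u)"
    using LM.lc_eq C m Q P s u LM.S_mult LM.lrel_sym by (metis LM.smult_closed)
  then show ?thesis unfolding LM.lm_smult_aux p_def[symmetric] q_def[symmetric] p q by simp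
qed

lemma loc_ring_eqs:
  "carrier (loc_ring R S) = carrier (loc_mod R S (ring_mod R))"
  "x \<oplus>\<^bsub>loc_ring R S\<^esub> y = x \<oplus>\<^bsub>loc_mod R S (ring_mod R)\<^esub> y"
  "x \<otimes>\<^bsub>loc_ring R S\<^esub> y = x \<odot>\<^bsub>loc_mod R S (ring_mod R)\<^esub> y"
  unfolding loc_ring_def loc_mod_def ring_mod_def by simp_all


lemma fin_choice_S:
  assumes ms: "mult_set R S" and c: "cring R" and fin: "finite G"
    and cl: "\<And>v g a. P v g \<Longrightarrow> v \<in> S \<Longrightarrow> a \<in> S \<Longrightarrow> P (a \<otimes>\<^bsub>R\<^esub> v) g"
    and ex: "\<forall>g\<in>G. \<exists>v\<in>S. P v g"
  shows "\<exists>V\<in>S. \<forall>g\<in>G. P V g"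
  using fin ex
proof (induction G rule: finite_induct)
  case empty then show ?case using ms unfolding mult_set_def by auto
next
  case (insert g F)
  then obtain V where V: "V \<in> S" "\<forall>g\<in>F. P V g" by auto
  obtain v where v: "v \<in> S" "P v g" using insert by auto
  have Sc: "S \<subseteq> carrier R" "\<forall>s\<in>S. \<forall>u\<in>S. s \<otimes>\<^bsub>R\<^esub> u \<in> S" using ms unfolding mult_set_def by auto
  have "v \<otimes>\<^bsub>R\<^esub> V = V \<otimes>\<^bsub>R\<^esub> v" using Sc V v cring.cring_simprules(14)[OF c] by blast
  then have "P (v \<otimes>\<^bsub>R\<^esub> V) g" using cl[OF v(2) v(1) V(1)] by simp
  moreover have "\<forall>g\<in>F. P (v \<otimes>\<^bsub>R\<^esub> V) g" using cl V v by blast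
  ultimately show ?case using Sc V v by blast
qed

lemma (in lmod) part4:
  assumes Iid: "ideal I R" and fg: "fin_gen_ideal R I"
  shows "can_loc R S I M \<in> carrier (loc_mod R S (Hmod R I M))
            \<rightarrow> carrier (Hmod (loc_ring R S) (loc_ideal R S I) (loc_mod R S M))
       \<and> inj_on (can_loc R S I M) (carrier (loc_mod R S (Hmod R I M)))"
proof -
  interpret HM: hctx R M I by (rule hctxI[OF is_cring Iid module_axioms])
  interpret LR: lmod R "ring_mod R" S using lmod_ring[OF is_cring ms] .
  interpret LH: lmod R "Hmod R I M" S unfolding lmod_def lmod_axioms_def using HM.Hmod_module ms by blast
  let ?L = "loc_mod R S M"
  let ?LR = "loc_ring R S"
  let ?LI = "loc_ideal R S I"
  let ?RM = "ring_mod R"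
  let ?H = "Hmod R I M"
  have RMc: "\<And>x. x \<in> carrier ?RM \<longleftrightarrow> x \<in> carrier R" by (simp add: ring_mod_def)
  have RMs: "\<And>a x. a \<odot>\<^bsub>?RM\<^esub> x = a \<otimes> x" "\<And>x y. x \<oplus>\<^bsub>?RM\<^esub> y = x \<oplus> y" by (simp_all add: ring_mod_def)
  note Sc = S_sub
  have LI_mem: "\<And>c. c \<in> ?LI \<longleftrightarrow> (\<exists>t\<in>I. \<exists>u\<in>S. c = loc_cls R S ?RM t u)"
    unfolding loc_ideal_def by auto
  have LI_add: "loc_cls R S ?RM t u \<oplus>\<^bsub>?LR\<^esub> loc_cls R S ?RM t' u' = loc_cls R S ?RM ((u' \<otimes> t) \<oplus> (u \<otimes> t')) (u \<otimes> u')"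
    if "t \<in> carrier R" "u \<in> S" "t' \<in> carrier R" "u' \<in> S" for t u t' u'
    using LR.lm_add[of t u t' u'] that RMc RMs unfolding loc_ring_eqs by simp
  have LI_mult: "loc_cls R S ?RM a v \<otimes>\<^bsub>?LR\<^esub> loc_cls R S ?RM t u = loc_cls R S ?RM (a \<otimes> t) (v \<otimes> u)"
    if "a \<in> carrier R" "v \<in> S" "t \<in> carrier R" "u \<in> S" for a v t u
    using lm_smult[OF LR.lmod_axioms that(1,2) _ that(4)] that RMc RMs unfolding loc_ring_eqs
    by (metis LR.lmod_axioms lm_smult)
  have LR_car: "\<And>r. r \<in> carrier ?LR \<longleftrightarrow> (\<exists>a\<in>carrier R. \<exists>v\<in>S. r = loc_cls R S ?RM a v)"
    unfolding loc_ring_eqs LR.lm_carrier by (simp add: ring_mod_def)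
  have lh: "loc_hom R S I M \<phi> (loc_cls R S ?RM t u) = loc_cls R S M (\<phi> t) u"
    if p: "\<phi> \<in> Zset R I M" and t: "t \<in> I" and u: "u \<in> S" for \<phi> t u
  proof -
    have tc: "t \<in> carrier ?RM" using t HM.I_carr RMc by auto
    define q where "q = (SOME p. p \<in> loc_cls R S ?RM t u \<and> fst p \<in> I)"
    have "q \<in> loc_cls R S ?RM t u \<and> fst q \<in> I" unfolding q_def
      using LR.lc_self[OF tc u] t by (intro someI[where P="\<lambda>p. p \<in> loc_cls R S ?RM t u \<and> fst p \<in> I"]) auto
    then obtain t1 u1 where q: "q = (t1, u1)" "t1 \<in> I" "u1 \<in> S" "LR.lrel t u t1 u1"
      using LR.lc_mem[OF tc u] by (cases q) auto
    then obtain w where w: "w \<in> S" "(w \<otimes> u1) \<otimes> t = (w \<otimes> u) \<otimes> t1" unfolding LR.lrel_def RMs by auto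
    have "(w \<otimes> u1) \<odot>\<^bsub>M\<^esub> \<phi> t = (w \<otimes> u) \<odot>\<^bsub>M\<^esub> \<phi> t1"
      using HM.ZsetD(3)[OF p, of "w \<otimes> u1" t] HM.ZsetD(3)[OF p, of "w \<otimes> u" t1] w q t u Sc by simp
    then have "lrel (\<phi> t) u (\<phi> t1) u1" unfolding lrel_def using w(1) by blast
    then have "loc_cls R S M (\<phi> t1) u1 = loc_cls R S M (\<phi> t) u"
      using lc_eq[of "\<phi> t" u "\<phi> t1" u1] HM.Zset_carr[OF p] t u q by simp
    moreover have "loc_cls R S ?RM t u \<in> ?LI" using LI_mem t u by auto
    ultimately show ?thesis unfolding loc_hom_def using q by (simp add: q_def[symmetric])
  qed
  define \<Psi> where "\<Psi> = (\<lambda>\<phi> s. (\<lambda>c\<in>?LI. loc_cls R S ?RM \<one> s \<odot>\<^bsub>?L\<^esub> loc_hom R S I M \<phi> c))"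
  have Psi_at: "\<Psi> \<phi> s (loc_cls R S ?RM t u) = loc_cls R S M (\<phi> t) (s \<otimes> u)"
    if p: "\<phi> \<in> Zset R I M" and s: "s \<in> S" and t: "t \<in> I" and u: "u \<in> S" for \<phi> s t u
  proof -
    have "loc_cls R S ?RM t u \<in> ?LI" using LI_mem t u by auto
    then show ?thesis unfolding \<Psi>_def using lh[OF p t u] lm_smult[OF lmod_axioms one_closed s HM.Zset_carr[OF p t] u]
      HM.Zset_carr[OF p t] by simp
  qed

  have LIc: "\<And>c. c \<in> ?LI \<Longrightarrow> (\<exists>t u. t \<in> I \<and> u \<in> S \<and> c = loc_cls R S ?RM t u)" using LI_mem by auto
  have tRM: "\<And>t. t \<in> I \<Longrightarrow> t \<in> carrier ?RM" using HM.I_carr RMc by auto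
  have Psi_Z: "\<Psi> \<phi> s \<in> Zset ?LR ?LI ?L" if p: "\<phi> \<in> Zset R I M" and s: "s \<in> S" for \<phi> s
  proof -
    note pc = HM.Zset_carr[OF p]
    have A: "\<Psi> \<phi> s \<in> ?LI \<rightarrow>\<^sub>E carrier ?L"
    proof
      fix c assume cL: "c \<in> ?LI"
      obtain t u where tu: "t \<in> I" "u \<in> S" "c = loc_cls R S ?RM t u" using LIc[OF cL] by blast
      show "\<Psi> \<phi> s c \<in> carrier ?L" unfolding tu(3) Psi_at[OF p s tu(1,2)] lm_carrier
        using pc tu s S_mult by blast
    next
      fix c assume "c \<notin> ?LI" then show "\<Psi> \<phi> s c = undefined" unfolding \<Psi>_def by simp
    qed
    have B: "\<Psi> \<phi> s (c \<oplus>\<^bsub>?LR\<^esub> d) = \<Psi> \<phi> s c \<oplus>\<^bsub>?L\<^esub> \<Psi> \<phi> s d" if cd: "c \<in> ?LI" "d \<in> ?LI" for c d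
    proof -
      obtain t u where tu: "t \<in> I" "u \<in> S" "c = loc_cls R S ?RM t u" using LIc cd(1) by blast
      obtain t' u' where tu': "t' \<in> I" "u' \<in> S" "d = loc_cls R S ?RM t' u'" using LIc cd(2) by blast
      note C = s[THEN S_sub] tu(2)[THEN S_sub] tu'(2)[THEN S_sub] tu(1)[THEN HM.I_carr] tu'(1)[THEN HM.I_carr]
        pc[OF tu(1)] pc[OF tu'(1)]
      have I2: "(u' \<otimes> t) \<oplus> (u \<otimes> t') \<in> I" using tu tu' HM.I_add HM.I_mult C by blast
      have "\<Psi> \<phi> s (c \<oplus>\<^bsub>?LR\<^esub> d) = loc_cls R S M (\<phi> ((u' \<otimes> t) \<oplus> (u \<otimes> t'))) (s \<otimes> (u \<otimes> u'))"
        unfolding tu(3) tu'(3) LI_add[OF C(4) tu(2) C(5) tu'(2)] using Psi_at[OF p s I2] tu tu' S_mult by simp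
      also have "\<dots> = loc_cls R S M ((u' \<odot>\<^bsub>M\<^esub> \<phi> t) \<oplus>\<^bsub>M\<^esub> (u \<odot>\<^bsub>M\<^esub> \<phi> t')) (s \<otimes> (u \<otimes> u'))"
        using HM.ZsetD(2)[OF p] HM.ZsetD(3)[OF p] tu tu' C HM.I_mult by simp
      also have "\<dots> = loc_cls R S M (((s \<otimes> u') \<odot>\<^bsub>M\<^esub> \<phi> t) \<oplus>\<^bsub>M\<^esub> ((s \<otimes> u) \<odot>\<^bsub>M\<^esub> \<phi> t')) ((s \<otimes> u) \<otimes> (s \<otimes> u'))"
      proof (rule lc_eqI)
        show "((s \<otimes> u) \<otimes> (s \<otimes> u')) \<odot>\<^bsub>M\<^esub> ((u' \<odot>\<^bsub>M\<^esub> \<phi> t) \<oplus>\<^bsub>M\<^esub> (u \<odot>\<^bsub>M\<^esub> \<phi> t')) =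
          (s \<otimes> (u \<otimes> u')) \<odot>\<^bsub>M\<^esub> (((s \<otimes> u') \<odot>\<^bsub>M\<^esub> \<phi> t) \<oplus>\<^bsub>M\<^esub> ((s \<otimes> u) \<odot>\<^bsub>M\<^esub> \<phi> t'))"
        proof -
          have e1: "((s \<otimes> u) \<otimes> (s \<otimes> u')) \<otimes> u' = (s \<otimes> (u \<otimes> u')) \<otimes> (s \<otimes> u')"
            and e2: "((s \<otimes> u) \<otimes> (s \<otimes> u')) \<otimes> u = (s \<otimes> (u \<otimes> u')) \<otimes> (s \<otimes> u)" using C by algebra+
          show ?thesis using C by (simp add: smult_r_distr smult_assoc1[symmetric] e1 e2)
        qed
      qed (use C tu tu' s S_mult in auto)
      also have "\<dots> = \<Psi> \<phi> s c \<oplus>\<^bsub>?L\<^esub> \<Psi> \<phi> s d"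
        unfolding tu(3) tu'(3) Psi_at[OF p s tu(1,2)] Psi_at[OF p s tu'(1,2)]
        using lm_add C s tu tu' S_mult by simp
      finally show ?thesis .
    qed
    have Cc: "\<Psi> \<phi> s (r \<otimes>\<^bsub>?LR\<^esub> c) = r \<odot>\<^bsub>?L\<^esub> \<Psi> \<phi> s c" if rc: "r \<in> carrier ?LR" "c \<in> ?LI" for r c
    proof -
      obtain a v where av: "a \<in> carrier R" "v \<in> S" "r = loc_cls R S ?RM a v" using LR_car rc(1) by blast
      obtain t u where tu: "t \<in> I" "u \<in> S" "c = loc_cls R S ?RM t u" using LIc rc(2) by blast
      note C = s[THEN S_sub] tu(2)[THEN S_sub] av(2)[THEN S_sub] tu(1)[THEN HM.I_carr] av(1) pc[OF tu(1)]
      have "\<Psi> \<phi> s (r \<otimes>\<^bsub>?LR\<^esub> c) = loc_cls R S M (\<phi> (a \<otimes> t)) (s \<otimes> (v \<otimes> u))"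
        unfolding av(3) tu(3) LI_mult[OF av(1,2) C(4) tu(2)]
        using Psi_at[OF p s HM.I_mult[OF av(1) tu(1)]] av tu S_mult by simp
      also have "\<dots> = loc_cls R S M (a \<odot>\<^bsub>M\<^esub> \<phi> t) (v \<otimes> (s \<otimes> u))"
        using HM.ZsetD(3)[OF p av(1) tu(1)] C by (simp add: m_lcomm)
      also have "\<dots> = r \<odot>\<^bsub>?L\<^esub> \<Psi> \<phi> s c"
        unfolding av(3) tu(3) Psi_at[OF p s tu(1,2)] using lm_smult[OF lmod_axioms av(1,2) C(6)] s tu S_mult by simp
      finally show ?thesis .
    qed
    have D: "\<exists>n\<in>carrier ?L. \<Psi> \<phi> s c = c \<odot>\<^bsub>?L\<^esub> n" if cL: "c \<in> ?LI" for c
    proof -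
      obtain t u where tu: "t \<in> I" "u \<in> S" "c = loc_cls R S ?RM t u" using LIc cL by blast
      obtain m where m: "m \<in> carrier M" "\<phi> t = t \<odot>\<^bsub>M\<^esub> m" using HM.ZsetD(4)[OF p tu(1)] by blast
      have "c \<odot>\<^bsub>?L\<^esub> loc_cls R S M m s = loc_cls R S M (t \<odot>\<^bsub>M\<^esub> m) (u \<otimes> s)"
        unfolding tu(3) using lm_smult[OF lmod_axioms HM.I_carr[OF tu(1)] tu(2) m(1) s] by simp
      also have "\<dots> = \<Psi> \<phi> s c" unfolding tu(3) Psi_at[OF p s tu(1,2)] m(2)
        using s tu Sc by (simp add: m_comm)
      finally have "\<Psi> \<phi> s c = c \<odot>\<^bsub>?L\<^esub> loc_cls R S M m s" by simp
      moreover have "loc_cls R S M m s \<in> carrier ?L" using lm_carrier m s by auto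
      ultimately show ?thesis by blast
    qed
    show ?thesis unfolding Zset_def hom_lin_def using A B Cc D by auto
  qed

  have L0: "\<zero>\<^bsub>?L\<^esub> = loc_cls R S M \<zero>\<^bsub>M\<^esub> \<one>" by (rule lm_zero)
  have L0c: "\<zero>\<^bsub>?L\<^esub> \<in> carrier ?L" unfolding L0 lm_carrier using S_one by blast
  have smz: "loc_cls R S ?RM a v \<odot>\<^bsub>?L\<^esub> \<zero>\<^bsub>?L\<^esub> = \<zero>\<^bsub>?L\<^esub>" if "a \<in> carrier R" "v \<in> S" for a v
  proof -
    have "loc_cls R S ?RM a v \<odot>\<^bsub>?L\<^esub> \<zero>\<^bsub>?L\<^esub> = loc_cls R S M \<zero>\<^bsub>M\<^esub> (v \<otimes> \<one>)"
      unfolding L0 using lm_smult[OF lmod_axioms that(1,2) M.zero_closed S_one] that by simp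
    also have "\<dots> = \<zero>\<^bsub>?L\<^esub>" unfolding L0 using that S_sub S_one by (intro lc_eqI) auto
    finally show ?thesis .
  qed
  have addz: "x \<oplus>\<^bsub>?L\<^esub> \<zero>\<^bsub>?L\<^esub> = x" if hyp: "x \<in> carrier ?L" for x
  proof -
    obtain m w where mw: "m \<in> carrier M" "w \<in> S" "x = loc_cls R S M m w" using hyp lm_carrier by auto
    show ?thesis unfolding mw(3) L0 using lm_add[OF mw(1,2) M.zero_closed S_one] mw S_sub by simp
  qed
  have LI_add_mem: "c \<oplus>\<^bsub>?LR\<^esub> d \<in> ?LI" if hyp: "c \<in> ?LI" "d \<in> ?LI" for c d
  proof -
    obtain t u where tu: "t \<in> I" "u \<in> S" "c = loc_cls R S ?RM t u" using LIc hyp(1) by blast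
    obtain t' u' where tu': "t' \<in> I" "u' \<in> S" "d = loc_cls R S ?RM t' u'" using LIc hyp(2) by blast
    have "(u' \<otimes> t) \<oplus> (u \<otimes> t') \<in> I"
      using HM.I_add[OF HM.I_mult[OF S_sub[OF tu'(2)] tu(1)] HM.I_mult[OF S_sub[OF tu(2)] tu'(1)]] .
    moreover have "u \<otimes> u' \<in> S" using S_mult[OF tu(2) tu'(2)] .
    ultimately show ?thesis unfolding tu(3) tu'(3) LI_add[OF HM.I_carr[OF tu(1)] tu(2) HM.I_carr[OF tu'(1)] tu'(2)] LI_mem
      by blast
  qed
  have LI_mult_mem: "r \<otimes>\<^bsub>?LR\<^esub> c \<in> ?LI" if hyp: "r \<in> carrier ?LR" "c \<in> ?LI" for r c
  proof -
    obtain a v where av: "a \<in> carrier R" "v \<in> S" "r = loc_cls R S ?RM a v" using LR_car hyp(1) by blast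
    obtain t u where tu: "t \<in> I" "u \<in> S" "c = loc_cls R S ?RM t u" using LIc hyp(2) by blast
    have "a \<otimes> t \<in> I" using HM.I_mult[OF av(1) tu(1)] .
    moreover have "v \<otimes> u \<in> S" using S_mult[OF av(2) tu(2)] .
    ultimately show ?thesis unfolding av(3) tu(3) LI_mult[OF av(1,2) HM.I_carr[OF tu(1)] tu(2)] LI_mem
      by blast
  qed
  define z where "z = (\<lambda>c\<in>?LI. \<zero>\<^bsub>?L\<^esub>)"
  have zB: "z \<in> Bset ?LR ?LI ?L"
  proof -
    have cz: "c \<odot>\<^bsub>?L\<^esub> \<zero>\<^bsub>?L\<^esub> = \<zero>\<^bsub>?L\<^esub>" if hc: "c \<in> carrier ?LR" for c
    proof -
      obtain a v where av: "a \<in> carrier R" "v \<in> S" "c = loc_cls R S ?RM a v" using LR_car hc by blast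
      show ?thesis unfolding av(3) using smz[OF av(1,2)] .
    qed
    have LIR: "c \<in> carrier ?LR" if hc: "c \<in> ?LI" for c
    proof -
      obtain t u where tu: "t \<in> I" "u \<in> S" "c = loc_cls R S ?RM t u" using LIc hc by blast
      show ?thesis unfolding LR_car using HM.I_carr[OF tu(1)] tu(2,3) by blast
    qed
    have zz: "\<zero>\<^bsub>?L\<^esub> \<oplus>\<^bsub>?L\<^esub> \<zero>\<^bsub>?L\<^esub> = \<zero>\<^bsub>?L\<^esub>" using addz[OF L0c] .
    have z1: "z \<in> ?LI \<rightarrow>\<^sub>E carrier ?L" unfolding z_def using L0c by simp
    have z2: "\<forall>c\<in>?LI. \<forall>d\<in>?LI. z (c \<oplus>\<^bsub>?LR\<^esub> d) = z c \<oplus>\<^bsub>?L\<^esub> z d"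
      unfolding z_def using LI_add_mem zz by simp
    have z3: "\<forall>r\<in>carrier ?LR. \<forall>c\<in>?LI. z (r \<otimes>\<^bsub>?LR\<^esub> c) = r \<odot>\<^bsub>?L\<^esub> z c"
      unfolding z_def using LI_mult_mem cz by simp
    have z4: "\<forall>c\<in>?LI. \<exists>m\<in>carrier ?L. z c = c \<odot>\<^bsub>?L\<^esub> m"
    proof
      fix c assume hc: "c \<in> ?LI"
      have "z c = c \<odot>\<^bsub>?L\<^esub> \<zero>\<^bsub>?L\<^esub>" unfolding z_def using hc cz[OF LIR[OF hc]] by simp
      then show "\<exists>m\<in>carrier ?L. z c = c \<odot>\<^bsub>?L\<^esub> m" using L0c by blast
    qed
    have "z \<in> Zset ?LR ?LI ?L" unfolding Zset_def hom_lin_def using z1 z2 z3 z4 by blast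
    moreover have "\<forall>t\<in>?LI. z t = t \<odot>\<^bsub>?L\<^esub> \<zero>\<^bsub>?L\<^esub>" unfolding z_def using cz LIR by simp
    ultimately show ?thesis unfolding Bset_def using L0c by blast
  qed
  have self: "\<psi> \<in> Hclass ?LR ?LI ?L \<psi>" if p: "\<psi> \<in> Zset ?LR ?LI ?L" for \<psi>
  proof -
    have pe: "\<psi> \<in> ?LI \<rightarrow>\<^sub>E carrier ?L" using p unfolding Zset_def hom_lin_def by auto
    have "hadd ?LI ?L \<psi> z = \<psi>"
    proof
      fix c show "hadd ?LI ?L \<psi> z c = \<psi> c"
        using pe addz unfolding hadd_def z_def by (cases "c \<in> ?LI") (auto simp: PiE_iff extensional_def)
    qed
    then have "\<psi> = hadd ?LI ?L \<psi> z" by simp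
    then show ?thesis unfolding Hclass_def using zB by blast
  qed
  have canl: "\<exists>X1 s1 \<phi>1. X1 \<in> carrier ?H \<and> s1 \<in> S \<and> \<xi> = loc_cls R S ?H X1 s1 \<and> \<phi>1 \<in> Zset R I M
     \<and> X1 = Hclass R I M \<phi>1 \<and> can_loc R S I M \<xi> = Hclass ?LR ?LI ?L (\<Psi> \<phi>1 s1)"
    if xi: "\<xi> \<in> carrier (loc_mod R S ?H)" for \<xi>
  proof -
    obtain Xa s where Xs: "Xa \<in> carrier ?H" "s \<in> S" "\<xi> = loc_cls R S ?H Xa s" using xi LH.lm_carrier by auto
    define p where "p = (SOME p. p \<in> \<xi>)"
    obtain X1 s1 where p: "p = (X1, s1)" by (cases p)
    have P: "X1 \<in> carrier ?H" "s1 \<in> S" "loc_cls R S ?H X1 s1 = \<xi>"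
      using LH.lc_some[OF Xs(1,2)] p unfolding p_def Xs(3) by auto
    obtain \<phi>0 where p0: "\<phi>0 \<in> Zset R I M" "X1 = Hclass R I M \<phi>0" using P(1) HM.Hmod_carrier by auto
    define \<phi>1 where "\<phi>1 = (SOME \<phi>. \<phi> \<in> X1)"
    have p1: "\<phi>1 \<in> Zset R I M" "X1 = Hclass R I M \<phi>1" using HM.some_rep[OF p0(1)] unfolding \<phi>1_def p0(2) by auto
    have "can_loc R S I M \<xi> = Hclass ?LR ?LI ?L (\<Psi> \<phi>1 s1)"
      unfolding can_loc_def p_def[symmetric] p \<Psi>_def \<phi>1_def by simp
    then show ?thesis
      apply (intro exI[of _ X1] exI[of _ s1] exI[of _ \<phi>1])
      using P p1 by simp
  qed
  have part_fun: "can_loc R S I M \<in> carrier (loc_mod R S ?H) \<rightarrow> carrier (Hmod ?LR ?LI ?L)"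
  proof
    fix \<xi> assume "\<xi> \<in> carrier (loc_mod R S ?H)"
    then obtain X1 s1 \<phi>1 where "s1 \<in> S" "\<phi>1 \<in> Zset R I M" "can_loc R S I M \<xi> = Hclass ?LR ?LI ?L (\<Psi> \<phi>1 s1)"
      using canl by blast
    then show "can_loc R S I M \<xi> \<in> carrier (Hmod ?LR ?LI ?L)" unfolding Hmod_def using Psi_Z by auto
  qed

  obtain G where G: "finite G" "G \<subseteq> carrier R" "I = Idl G" using fg unfolding fin_gen_ideal_def by auto
  have GI: "G \<subseteq> I" using G genideal_self by auto
  have part_inj: "inj_on (can_loc R S I M) (carrier (loc_mod R S ?H))"
  proof (rule inj_onI)
    fix \<xi> \<xi>' assume xi: "\<xi> \<in> carrier (loc_mod R S ?H)" and xi': "\<xi>' \<in> carrier (loc_mod R S ?H)"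
      and eq: "can_loc R S I M \<xi> = can_loc R S I M \<xi>'"
    obtain X1 s1 \<phi>1 where A: "X1 \<in> carrier ?H" "s1 \<in> S" "\<xi> = loc_cls R S ?H X1 s1" "\<phi>1 \<in> Zset R I M"
      "X1 = Hclass R I M \<phi>1" "can_loc R S I M \<xi> = Hclass ?LR ?LI ?L (\<Psi> \<phi>1 s1)" using canl[OF xi] by blast
    obtain Y1 s2 \<psi>1 where B: "Y1 \<in> carrier ?H" "s2 \<in> S" "\<xi>' = loc_cls R S ?H Y1 s2" "\<psi>1 \<in> Zset R I M"
      "Y1 = Hclass R I M \<psi>1" "can_loc R S I M \<xi>' = Hclass ?LR ?LI ?L (\<Psi> \<psi>1 s2)" using canl[OF xi'] by blast
    have "\<Psi> \<phi>1 s1 \<in> Hclass ?LR ?LI ?L (\<Psi> \<psi>1 s2)" using self[OF Psi_Z[OF A(4,2)]] eq A(6) B(6) by simp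
    then obtain b where b: "b \<in> Bset ?LR ?LI ?L" "\<Psi> \<phi>1 s1 = hadd ?LI ?L (\<Psi> \<psi>1 s2) b"
      unfolding Hclass_def by blast
    then obtain n where n: "n \<in> carrier ?L" "\<forall>c\<in>?LI. b c = c \<odot>\<^bsub>?L\<^esub> n" unfolding Bset_def by blast
    obtain m w where mw: "m \<in> carrier M" "w \<in> S" "n = loc_cls R S M m w" using n(1) lm_carrier by auto
    note Cs = A(2)[THEN S_sub] B(2)[THEN S_sub] mw(2)[THEN S_sub]
    define P where "P = (\<lambda>v t. t \<in> I \<and> (v \<otimes> (s2 \<otimes> w)) \<odot>\<^bsub>M\<^esub> \<phi>1 t = (v \<otimes> s1) \<odot>\<^bsub>M\<^esub> ((w \<odot>\<^bsub>M\<^esub> \<psi>1 t) \<oplus>\<^bsub>M\<^esub> (s2 \<odot>\<^bsub>M\<^esub> (t \<odot>\<^bsub>M\<^esub> m))))"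
    have exP: "\<exists>v\<in>S. P v t" if t: "t \<in> I" for t
    proof -
      have tc: "t \<in> carrier R" using HM.I_carr t .
      have cI: "loc_cls R S ?RM t \<one> \<in> ?LI" unfolding LI_mem using t S_one by blast
      have c1: "\<phi>1 t \<in> carrier M" "\<psi>1 t \<in> carrier M" using HM.Zset_carr A(4) B(4) t by auto
      have "loc_cls R S M (\<phi>1 t) s1 = \<Psi> \<phi>1 s1 (loc_cls R S ?RM t \<one>)"
        using Psi_at[OF A(4,2) t S_one] Cs by simp
      also have "\<dots> = \<Psi> \<psi>1 s2 (loc_cls R S ?RM t \<one>) \<oplus>\<^bsub>?L\<^esub> b (loc_cls R S ?RM t \<one>)"
        unfolding b(2) hadd_def using cI by simp
      also have "\<dots> = loc_cls R S M (\<psi>1 t) s2 \<oplus>\<^bsub>?L\<^esub> loc_cls R S M (t \<odot>\<^bsub>M\<^esub> m) w"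
        using Psi_at[OF B(4,2) t S_one] n(2) cI mw(3) lm_smult[OF lmod_axioms tc S_one mw(1,2)] Cs by simp
      also have "\<dots> = loc_cls R S M ((w \<odot>\<^bsub>M\<^esub> \<psi>1 t) \<oplus>\<^bsub>M\<^esub> (s2 \<odot>\<^bsub>M\<^esub> (t \<odot>\<^bsub>M\<^esub> m))) (s2 \<otimes> w)"
        using lm_add[OF c1(2) B(2) smult_closed[OF tc mw(1)] mw(2)] .
      finally have eqc: "loc_cls R S M (\<phi>1 t) s1 = loc_cls R S M ((w \<odot>\<^bsub>M\<^esub> \<psi>1 t) \<oplus>\<^bsub>M\<^esub> (s2 \<odot>\<^bsub>M\<^esub> (t \<odot>\<^bsub>M\<^esub> m))) (s2 \<otimes> w)" .
      have mc: "(w \<odot>\<^bsub>M\<^esub> \<psi>1 t) \<oplus>\<^bsub>M\<^esub> (s2 \<odot>\<^bsub>M\<^esub> (t \<odot>\<^bsub>M\<^esub> m)) \<in> carrier M"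
        using Cs tc mw(1) c1 by simp
      have "lrel (\<phi>1 t) s1 ((w \<odot>\<^bsub>M\<^esub> \<psi>1 t) \<oplus>\<^bsub>M\<^esub> (s2 \<odot>\<^bsub>M\<^esub> (t \<odot>\<^bsub>M\<^esub> m))) (s2 \<otimes> w)"
        using lc_eq[OF c1(1) A(2) mc S_mult[OF B(2) mw(2)]] eqc by simp
      then show ?thesis unfolding lrel_def P_def using t by blast
    qed
    have clP: "P (a \<otimes> v) g" if "P v g" "v \<in> S" "a \<in> S" for v g a
    proof -
      have gI: "g \<in> I" using that(1) unfolding P_def by simp
      have cc: "\<phi>1 g \<in> carrier M" "\<psi>1 g \<in> carrier M" "g \<in> carrier R" using HM.Zset_carr A(4) B(4) gI HM.I_carr by auto
      have "a \<odot>\<^bsub>M\<^esub> ((v \<otimes> (s2 \<otimes> w)) \<odot>\<^bsub>M\<^esub> \<phi>1 g) = a \<odot>\<^bsub>M\<^esub> ((v \<otimes> s1) \<odot>\<^bsub>M\<^esub> ((w \<odot>\<^bsub>M\<^esub> \<psi>1 g) \<oplus>\<^bsub>M\<^esub> (s2 \<odot>\<^bsub>M\<^esub> (g \<odot>\<^bsub>M\<^esub> m))))"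
        using that(1) unfolding P_def by simp
      then show ?thesis unfolding P_def using that(2,3) Cs S_sub gI cc mw(1)
        by (simp add: smult_assoc1 m_assoc)
    qed
    have exG: "\<forall>g\<in>G. \<exists>v\<in>S. P v g"
    proof
      fix g assume "g \<in> G" then show "\<exists>v\<in>S. P v g" using exP GI by blast
    qed
    have "\<exists>V\<in>S. \<forall>g\<in>G. P V g"
      using fin_choice_S[OF ms is_cring G(1), of P] clP exG by blast
    then obtain V where V: "V \<in> S" "\<forall>g\<in>G. P V g" by blast
    note Cv = V(1)[THEN S_sub]
    define a0 where "a0 = V \<otimes> (s2 \<otimes> w)"
    define b0 where "b0 = V \<otimes> s1 \<otimes> w"
    define n0 where "n0 = (V \<otimes> s1 \<otimes> s2) \<odot>\<^bsub>M\<^esub> m"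
    have a0c: "a0 \<in> carrier R" and b0c: "b0 \<in> carrier R" and n0c: "n0 \<in> carrier M"
      unfolding a0_def b0_def n0_def using Cs Cv mw(1) by auto
    define FA where "FA = hsmult I M a0 \<phi>1"
    define FB where "FB = hadd I M (hsmult I M b0 \<psi>1) (\<lambda>t\<in>I. t \<odot>\<^bsub>M\<^esub> n0)"
    have FAZ: "FA \<in> Zset R I M" unfolding FA_def using HM.hsmult_Z[OF a0c A(4)] .
    have FBZ: "FB \<in> Zset R I M" unfolding FB_def using HM.hadd_Z[OF HM.hsmult_Z[OF b0c B(4)] HM.prin_Z[OF n0c]] .
    have "\<forall>g\<in>G. FA g = FB g"
    proof
      fix g assume g: "g \<in> G"
      have gI: "g \<in> I" using g GI by auto
      have gc: "g \<in> carrier R" using G(2) g by auto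
      have c1: "\<phi>1 g \<in> carrier M" "\<psi>1 g \<in> carrier M" using HM.Zset_carr A(4) B(4) gI by auto
      have "FA g = a0 \<odot>\<^bsub>M\<^esub> \<phi>1 g" unfolding FA_def hsmult_def using gI by simp
      also have "\<dots> = (V \<otimes> s1) \<odot>\<^bsub>M\<^esub> ((w \<odot>\<^bsub>M\<^esub> \<psi>1 g) \<oplus>\<^bsub>M\<^esub> (s2 \<odot>\<^bsub>M\<^esub> (g \<odot>\<^bsub>M\<^esub> m)))"
        using V(2) g unfolding P_def a0_def by simp
      also have "\<dots> = b0 \<odot>\<^bsub>M\<^esub> \<psi>1 g \<oplus>\<^bsub>M\<^esub> g \<odot>\<^bsub>M\<^esub> n0"
      proof -
        have e: "(V \<otimes> s1) \<otimes> (s2 \<otimes> g) = g \<otimes> (V \<otimes> s1 \<otimes> s2)" using Cs Cv gc by algebra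
        show ?thesis unfolding b0_def n0_def using Cs Cv gc mw(1) c1
          by (simp add: smult_r_distr smult_assoc1[symmetric] e m_assoc)
      qed
      also have "\<dots> = FB g" unfolding FB_def hsmult_def hadd_def using gI by simp
      finally show "FA g = FB g" .
    qed
    then have agr: "\<forall>t\<in>I. FA t = FB t" using HM.agree_gen[OF G(3) G(2) FAZ FBZ] by blast
    have "hrel I M (hsmult I M b0 \<psi>1) FA" unfolding hrel_def
    proof (intro bexI ballI)
      fix t assume "t \<in> I"
      then show "FA t = hsmult I M b0 \<psi>1 t \<oplus>\<^bsub>M\<^esub> t \<odot>\<^bsub>M\<^esub> n0" using agr unfolding FB_def hadd_def by simp
    qed (rule n0c)
    then have "Hclass R I M (hsmult I M b0 \<psi>1) = Hclass R I M FA"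
      using HM.Hclass_eq[OF HM.hsmult_Z[OF b0c B(4)] FAZ] by simp
    then have "b0 \<odot>\<^bsub>?H\<^esub> Y1 = a0 \<odot>\<^bsub>?H\<^esub> X1"
      unfolding A(5) B(5) HM.Hmod_smult[OF a0c A(4)] HM.Hmod_smult[OF b0c B(4)] FA_def by simp
    moreover have "a0 = (V \<otimes> w) \<otimes> s2" "b0 = (V \<otimes> w) \<otimes> s1" unfolding a0_def b0_def using Cs Cv by algebra+
    ultimately have "((V \<otimes> w) \<otimes> s2) \<odot>\<^bsub>?H\<^esub> X1 = ((V \<otimes> w) \<otimes> s1) \<odot>\<^bsub>?H\<^esub> Y1" by simp
    then have "LH.lrel X1 s1 Y1 s2" unfolding LH.lrel_def using S_mult[OF V(1) mw(2)] by blast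
    then show "\<xi> = \<xi>'" unfolding A(3) B(3) using LH.lc_eq[OF A(1,2) B(1,2)] by simp
  qed
  show ?thesis using part_fun part_inj by blast
qed



theorem proposition5p5:
  fixes R :: "'a ring" and I :: "'a set" and M :: "('a, 'b) module"
    and \<Lambda> :: "'l set" and Ms :: "'l \<Rightarrow> ('a, 'c) module" and S :: "'a set"
  assumes "cring R" and "ideal I R" and "module R M"
    and "\<forall>l\<in>\<Lambda>. module R (Ms l)"
  shows "is_mod_iso R (Hmod R I (prod_mod R \<Lambda> Ms)) (prod_mod R \<Lambda> (\<lambda>l. Hmod R I (Ms l)))
           (can_prod R I \<Lambda> Ms)
    \<and> (fin_gen_ideal R I \<longrightarrow>
         is_mod_iso R (Hmod R I (dsum_mod R \<Lambda> Ms)) (dsum_mod R \<Lambda> (\<lambda>l. Hmod R I (Ms l)))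
           (can_prod R I \<Lambda> Ms))
    \<and> (let J = ann_mod R M in
         bij_betw (can_quot R I J M) (carrier (Hmod R I M))
           (carrier (Hmod (R Quot J) (quot_ideal R I J) (quot_mod R J M)))
       \<and> (\<forall>Xa\<in>carrier (Hmod R I M). \<forall>Ya\<in>carrier (Hmod R I M).
            can_quot R I J M (Xa \<oplus>\<^bsub>Hmod R I M\<^esub> Ya)
            = can_quot R I J M Xa \<oplus>\<^bsub>Hmod (R Quot J) (quot_ideal R I J) (quot_mod R J M)\<^esub> can_quot R I J M Ya)
       \<and> (\<forall>r\<in>carrier R. \<forall>Xa\<in>carrier (Hmod R I M).
            can_quot R I J M (r \<odot>\<^bsub>Hmod R I M\<^esub> Xa)
            = (J +>\<^bsub>R\<^esub> r) \<odot>\<^bsub>Hmod (R Quot J) (quot_ideal R I J) (quot_mod R J M)\<^esub> can_quot R I J M Xa))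
    \<and> (mult_set R S \<and> fin_gen_ideal R I \<longrightarrow>
         can_loc R S I M \<in> carrier (loc_mod R S (Hmod R I M))
            \<rightarrow> carrier (Hmod (loc_ring R S) (loc_ideal R S I) (loc_mod R S M))
       \<and> inj_on (can_loc R S I M) (carrier (loc_mod R S (Hmod R I M))))"
proof -
  have P1: "is_mod_iso R (Hmod R I (prod_mod R \<Lambda> Ms)) (prod_mod R \<Lambda> (\<lambda>l. Hmod R I (Ms l)))
           (can_prod R I \<Lambda> Ms)" using part1 assms by blast
  have P2: "fin_gen_ideal R I \<longrightarrow>
         is_mod_iso R (Hmod R I (dsum_mod R \<Lambda> Ms)) (dsum_mod R \<Lambda> (\<lambda>l. Hmod R I (Ms l)))
           (can_prod R I \<Lambda> Ms)" using part2 assms by blast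
  interpret Q: qctx R M I "ann_mod R M"
    unfolding qctx_def qctx_axioms_def using assms by blast
  have P3: "let J = ann_mod R M in
         bij_betw (can_quot R I J M) (carrier (Hmod R I M))
           (carrier (Hmod (R Quot J) (quot_ideal R I J) (quot_mod R J M)))
       \<and> (\<forall>Xa\<in>carrier (Hmod R I M). \<forall>Ya\<in>carrier (Hmod R I M).
            can_quot R I J M (Xa \<oplus>\<^bsub>Hmod R I M\<^esub> Ya)
            = can_quot R I J M Xa \<oplus>\<^bsub>Hmod (R Quot J) (quot_ideal R I J) (quot_mod R J M)\<^esub> can_quot R I J M Ya)
       \<and> (\<forall>r\<in>carrier R. \<forall>Xa\<in>carrier (Hmod R I M).
            can_quot R I J M (r \<odot>\<^bsub>Hmod R I M\<^esub> Xa)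
            = (J +>\<^bsub>R\<^esub> r) \<odot>\<^bsub>Hmod (R Quot J) (quot_ideal R I J) (quot_mod R J M)\<^esub> can_quot R I J M Xa)"
    unfolding Let_def using Q.part3_main .
  have P4: "mult_set R S \<and> fin_gen_ideal R I \<longrightarrow>
         can_loc R S I M \<in> carrier (loc_mod R S (Hmod R I M))
            \<rightarrow> carrier (Hmod (loc_ring R S) (loc_ideal R S I) (loc_mod R S M))
       \<and> inj_on (can_loc R S I M) (carrier (loc_mod R S (Hmod R I M)))"
  proof
    assume a: "mult_set R S \<and> fin_gen_ideal R I"
    interpret L: lmod R M S unfolding lmod_def lmod_axioms_def using assms a by blast
    show "can_loc R S I M \<in> carrier (loc_mod R S (Hmod R I M))
            \<rightarrow> carrier (Hmod (loc_ring R S) (loc_ideal R S I) (loc_mod R S M))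
       \<and> inj_on (can_loc R S I M) (carrier (loc_mod R S (Hmod R I M)))"
      using L.part4 assms(2) a by blast
  qed
  show ?thesis using P1 P2 P3 P4 by blast
qed

end
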